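(* Let $g\in\mathbb{F}_q[x]$ be monic squarefree of degree $d\ge1$ and $\mathcal{H}_g=\{h/g: h\in\mathbb{F}_q[x],\ (h,g)=1,\ \deg h<d\}$. Then the map $f\mapsto\chi_f$ is a bijection from $\mathcal{H}_g$ onto the set of primitive Dirichlet characters $\chi$ modulo $g^2$ satisfying $\chi^p=1$ on $(\mathbb{F}_q[x]/g^2)^\times$. In particular each $\chi_f$, $f\in\mathcal H_g$, is even.
   Context: $p>2$ prime, $q$ a power of $p$, $\psi:\mathbb{F}_p\to\mathbb{C}^\times$ a nontrivial additive character, $\mathrm{tr}_{q/p}$ the trace $\mathbb{F}_q\to\mathbb{F}_p$. For $f=h/g\in\mathcal H_g$ and $c\in\mathbb{F}_q[x]$, $\chi_f(c)=\psi\big(\mathrm{tr}_{q/p}\sum_{c(\alpha)=0}f(\alpha)\big)$ if $(c,g)=1$ (sum over roots in $\overline{\mathbb{F}}_q$ with multiplicity), $\chi_f(c)=0$ otherwise; this is a Dirichlet character modulo $g^2$. A Dirichlet character modulo a monic $M$ is a character of $(\mathbb{F}_q[x]/M)^\times$ extended by $0$ to polynomials not coprime to $M$; it is primitive if there is no proper monic divisor $M_1$ of $M$ such that $\chi(a)$ depends only on $a\bmod M_1$ for $a$ coprime to $M$; it is even if $\chi(a)=1$ for all $a\in\mathbb{F}_q^\times$. *)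

theory Defs
  imports Complex_Main "HOL-Algebra.Algebraic_Closure_Type"
    "HOL-Computational_Algebra.Squarefree"
begin

text \<open>The field F_q is a finite field type 'a; F_p is its prime subfield
  (the image of of_nat).  The exponent n with q = p^n.\<close>

definition fq_exp :: "'a::{field,finite} itself \<Rightarrow> nat" where
  "fq_exp _ = (THE n. card (UNIV :: 'a set) = CHAR('a) ^ n)"

definition trace_fq :: "'a::{field,finite} \<Rightarrow> 'a" where
  "trace_fq x = (\<Sum>i<fq_exp TYPE('a). x ^ (CHAR('a) ^ i))"

definition root_sum :: "'a::{field,finite} poly \<Rightarrow> 'a poly \<Rightarrow> 'a poly \<Rightarrow> 'a" where
  "root_sum h g c = of_ac
     (\<Sum>\<alpha>\<in>{\<alpha>. poly (map_poly to_ac c) \<alpha> = 0}.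
        of_nat (order \<alpha> (map_poly to_ac c)) *
        (poly (map_poly to_ac h) \<alpha> / poly (map_poly to_ac g) \<alpha>))"

text \<open>chi_f for f = h/g; psi is an additive character of the prime field, given
  as a function on 'a whose values matter only on the prime subfield.\<close>
definition chi_f :: "('a::{field,finite} \<Rightarrow> complex) \<Rightarrow> 'a poly \<Rightarrow> 'a poly \<Rightarrow> 'a poly \<Rightarrow> complex" where
  "chi_f \<psi> h g c = (if coprime c g then \<psi> (trace_fq (root_sum h g c)) else 0)"

definition prime_subfield :: "'a::field set" where
  "prime_subfield = range of_nat"

definition nontrivial_additive_char :: "('a::field \<Rightarrow> complex) \<Rightarrow> bool" where
  "nontrivial_additive_char \<psi> \<longleftrightarrow>
     (\<forall>x\<in>prime_subfield. \<forall>y\<in>prime_subfield. \<psi> (x + y) = \<psi> x * \<psi> y) \<and>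
     (\<forall>x\<in>prime_subfield. \<psi> x \<noteq> 0) \<and>
     (\<exists>x\<in>prime_subfield. \<psi> x \<noteq> 1)"

definition dirichlet_char :: "'a::field poly \<Rightarrow> ('a poly \<Rightarrow> complex) \<Rightarrow> bool" where
  "dirichlet_char M \<chi> \<longleftrightarrow>
     (\<forall>a b. a mod M = b mod M \<longrightarrow> \<chi> a = \<chi> b) \<and>
     (\<forall>a. \<not> coprime a M \<longrightarrow> \<chi> a = 0) \<and>
     (\<forall>a b. coprime a M \<longrightarrow> coprime b M \<longrightarrow> \<chi> (a * b) = \<chi> a * \<chi> b) \<and>
     \<chi> 1 = 1"

definition primitive_dirichlet_char :: "'a::field poly \<Rightarrow> ('a poly \<Rightarrow> complex) \<Rightarrow> bool" where
  "primitive_dirichlet_char M \<chi> \<longleftrightarrow> dirichlet_char M \<chi> \<and>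
     \<not> (\<exists>M1. lead_coeff M1 = 1 \<and> M1 dvd M \<and> M1 \<noteq> M \<and>
          (\<forall>a b. coprime a M \<longrightarrow> coprime b M \<longrightarrow> a mod M1 = b mod M1 \<longrightarrow> \<chi> a = \<chi> b))"

definition even_char :: "('a::field poly \<Rightarrow> complex) \<Rightarrow> bool" where
  "even_char \<chi> \<longleftrightarrow> (\<forall>a. a \<noteq> 0 \<longrightarrow> \<chi> [:a:] = 1)"

end

theory Submission
  imports Defs "Berlekamp_Zassenhaus.Finite_Field"
begin


lemma ff_CHAR_prime: "prime CHAR('a::{field,finite})"
  by (simp add: finite_imp_CHAR_pos prime_CHAR_semidom)

lemma frob_add: "((x::'a::{field,finite}) + y) ^ CHAR('a) = x ^ CHAR('a) + y ^ CHAR('a)"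
  by (rule freshmans_dream[OF ff_CHAR_prime refl])

lemma frob_add': "((x::'a::{field,finite}) + y) ^ (CHAR('a)^n) = x ^ (CHAR('a)^n) + y ^ (CHAR('a)^n)"
  by (rule freshmans_dream'[OF ff_CHAR_prime refl])

lemma frob_diff: "((x::'a::{field,finite}) - y) ^ CHAR('a) = x ^ CHAR('a) - y ^ CHAR('a)"
proof -
  have "x ^ CHAR('a) = ((x - y) + y) ^ CHAR('a)" by simp
  also have "\<dots> = (x - y) ^ CHAR('a) + y ^ CHAR('a)" by (rule frob_add)
  finally show ?thesis by simp
qed

lemma frob_inj: "(x::'a::{field,finite}) ^ CHAR('a) = y ^ CHAR('a) \<Longrightarrow> x = y"
proof -
  assume "x ^ CHAR('a) = y ^ CHAR('a)"
  then have "(x - y) ^ CHAR('a) = 0" by (simp add: frob_diff)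
  then show "x = y" by simp
qed

lemma of_nat_frob: "(of_nat k :: 'a::{field,finite}) ^ CHAR('a) = of_nat k"
proof (induction k)
  case 0
  then show ?case using ff_CHAR_prime[where 'a='a] by (simp add: prime_gt_0_nat)
next
  case (Suc k)
  have "(of_nat (Suc k) :: 'a) ^ CHAR('a) = (of_nat k + 1) ^ CHAR('a)" by (simp add: add.commute)
  also have "\<dots> = of_nat k ^ CHAR('a) + 1 ^ CHAR('a)" by (rule frob_add)
  finally show ?case using Suc by simp
qed

definition addclosed :: "'a::{field,finite} set \<Rightarrow> bool" where
  "addclosed T \<longleftrightarrow> 0 \<in> T \<and> (\<forall>x\<in>T. \<forall>y\<in>T. x + y \<in> T)"

lemma addclosed_of_nat:
  assumes "addclosed T" "x \<in> T" shows "of_nat k * x \<in> T"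
proof (induction k)
  case 0 then show ?case using assms by (simp add: addclosed_def)
next
  case (Suc k)
  have "of_nat (Suc k) * x = x + of_nat k * x" by (simp add: algebra_simps)
  then show ?case using Suc assms by (simp add: addclosed_def)
qed

lemma addclosed_uminus:
  assumes "addclosed T" "(x::'a::{field,finite}) \<in> T" shows "- x \<in> T"
proof -
  have p: "CHAR('a) \<ge> 1" using ff_CHAR_prime[where 'a='a] prime_ge_1_nat by blast
  have "of_nat (CHAR('a) - 1) * x + x = of_nat CHAR('a) * x"
    using p by (simp add: algebra_simps of_nat_diff)
  then have "of_nat (CHAR('a) - 1) * x = - x" by (simp add: eq_neg_iff_add_eq_0)
  then show ?thesis using addclosed_of_nat[OF assms] by metis
qed

lemma addclosed_diff:
  assumes "addclosed T" "(x::'a::{field,finite}) \<in> T" "y \<in> T" shows "x - y \<in> T"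
  using addclosed_uminus[OF assms(1,3)] assms unfolding addclosed_def
  by (metis diff_conv_add_uminus)

lemma of_nat_inv_ff:
  assumes "0 < k" "k < CHAR('a::{field,finite})"
  shows "(of_nat (k ^ (CHAR('a) - 2)) :: 'a) * of_nat k = 1"
proof -
  have p: "CHAR('a) \<ge> 2" using ff_CHAR_prime[where 'a='a] prime_ge_2_nat by blast
  define m where "m = CHAR('a) - 2"
  have pm: "CHAR('a) = Suc (Suc m)" using p unfolding m_def by simp
  have nz: "(of_nat k :: 'a) \<noteq> 0"
    using assms by (auto simp: of_nat_eq_0_iff_char_dvd dest: dvd_imp_le)
  have "(of_nat k :: 'a) ^ Suc (Suc m) = of_nat k" using of_nat_frob[of k, where 'a='a] pm by simp
  then have "(of_nat k :: 'a) * (of_nat k ^ m * of_nat k) = of_nat k * 1"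
    by (simp add: algebra_simps)
  with nz have "(of_nat k :: 'a) ^ m * of_nat k = 1" by simp
  then show ?thesis by (simp add: m_def)
qed

lemma addclosed_grow:
  fixes T :: "'a::{field,finite} set"
  assumes T: "addclosed T" and x: "x \<notin> T"
  defines "T' \<equiv> (\<lambda>(t,j). t + of_nat j * x) ` (T \<times> {..<CHAR('a)})"
  shows "addclosed T'" "T \<subseteq> T'" "x \<in> T'" "card T' = card T * CHAR('a)"
proof -
  define p where "p = CHAR('a)"
  have p2: "p \<ge> 2" using ff_CHAR_prime[where 'a='a] prime_ge_2_nat p_def by blast
  have ofp: "(of_nat p :: 'a) = 0" by (simp add: p_def)
  have red: "(of_nat j :: 'a) = of_nat (j mod p)" for j
    by (metis mod_mult_div_eq of_nat_add of_nat_mult ofp mult_zero_left add_0_right)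
  show "addclosed T'"
    unfolding addclosed_def
  proof safe
    show "0 \<in> T'" unfolding T'_def
      by (rule image_eqI[of _ _ "(0,0)"]) (use T p2 in \<open>auto simp: addclosed_def p_def\<close>)
  next
    fix a b assume a: "a \<in> T'" and b: "b \<in> T'"
    then obtain t1 j1 t2 j2 where "t1 \<in> T" "t2 \<in> T" "j1 < p" "j2 < p"
      "a = t1 + of_nat j1 * x" "b = t2 + of_nat j2 * x" unfolding T'_def p_def by auto
    then have "a + b = (t1 + t2) + of_nat ((j1 + j2) mod p) * x"
      by (simp add: algebra_simps flip: red)
    moreover have "t1 + t2 \<in> T" using T \<open>t1 \<in> T\<close> \<open>t2 \<in> T\<close> by (simp add: addclosed_def)
    moreover have "(j1 + j2) mod p < p" using p2 by simp
    ultimately show "a + b \<in> T'" unfolding T'_def p_def by force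
  qed
  show "T \<subseteq> T'"
  proof
    fix t assume "t \<in> T"
    then show "t \<in> T'" unfolding T'_def
      by (intro image_eqI[of _ _ "(t,0)"]) (use p2 in \<open>auto simp: p_def\<close>)
  qed
  show "x \<in> T'" unfolding T'_def
    by (intro image_eqI[of _ _ "(0,1)"]) (use p2 T in \<open>auto simp: p_def addclosed_def\<close>)
  have inj: "inj_on (\<lambda>(t,j). t + of_nat j * x) (T \<times> {..<p})"
  proof (rule inj_onI, clarify)
    fix t1 j1 t2 j2 assume t: "t1 \<in> T" "t2 \<in> T" and j: "j1 < p" "j2 < p"
      and eq: "t1 + of_nat j1 * x = t2 + of_nat j2 * x"
    have key: "j1 = j2" if "t1 \<in> T" "t2 \<in> T" "j2 < j1" "j1 < p"
      "t1 + of_nat j1 * x = t2 + of_nat j2 * x" for t1 t2 j1 j2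
    proof -
      have "of_nat (j1 - j2) * x = t2 - t1" using that
        by (simp add: of_nat_diff algebra_simps)
      then have "of_nat (j1 - j2) * x \<in> T" using addclosed_diff[OF T] that by simp
      then have "of_nat ((j1 - j2) ^ (p - 2)) * (of_nat (j1 - j2) * x) \<in> T"
        by (rule addclosed_of_nat[OF T])
      moreover have "of_nat ((j1 - j2) ^ (p - 2)) * (of_nat (j1 - j2) * x) = x"
      proof -
        have "(of_nat ((j1 - j2) ^ (p - 2)) :: 'a) * of_nat (j1 - j2) = 1"
          using of_nat_inv_ff[of "j1 - j2", where 'a='a] that unfolding p_def by simp
        then show ?thesis by (metis mult.assoc mult_1)
      qed
      ultimately have "x \<in> T" by metis
      then show ?thesis using x by simp
    qed
    have "j1 = j2"
    proof (cases j1 j2 rule: linorder_cases)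
      case less
      have "t2 + of_nat j2 * x = t1 + of_nat j1 * x" using eq by simp
      from key[OF t(2) t(1) less j(2) this] show ?thesis by simp
    next
      case greater from key[OF t(1) t(2) greater j(1) eq] show ?thesis .
    qed simp
    then show "t1 = t2 \<and> j1 = j2" using eq by simp
  qed
  have "card T' = card (T \<times> {..<p})" unfolding T'_def p_def[symmetric]
    by (rule card_image[OF inj])
  also have "\<dots> = card T * p" by (simp add: card_cartesian_product)
  finally show "card T' = card T * CHAR('a)" by (simp add: p_def)
qed

lemma addclosed_card:
  fixes T :: "'a::{field,finite} set"
  assumes "addclosed T"
  shows "\<exists>n. card (UNIV :: 'a set) = card T * CHAR('a) ^ n"
  using assms
proof (induction "card (UNIV - T)" arbitrary: T rule: less_induct)
  case less
  show ?case
  proof (cases "T = UNIV")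
    case True then show ?thesis by (intro exI[of _ 0]) simp
  next
    case False
    then obtain x where x: "x \<notin> T" by auto
    define T' where "T' = (\<lambda>(t,j). t + of_nat j * x) ` (T \<times> {..<CHAR('a)})"
    note G = addclosed_grow[OF less.prems x, folded T'_def]
    have "card (UNIV - T') < card (UNIV - T)"
      by (rule psubset_card_mono) (use G x in auto)
    from less.hyps[OF this G(1)] obtain n where "card (UNIV :: 'a set) = card T' * CHAR('a) ^ n" ..
    then show ?thesis using G(4) by (intro exI[of _ "Suc n"]) (simp add: algebra_simps)
  qed
qed

lemma card_ff_prime_power: "\<exists>n. card (UNIV :: 'a::{field,finite} set) = CHAR('a) ^ n"
proof -
  have "addclosed ({0} :: 'a set)" by (simp add: addclosed_def)
  from addclosed_card[OF this] show ?thesis by simp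
qed

lemma fq_exp: "card (UNIV :: 'a::{field,finite} set) = CHAR('a) ^ fq_exp TYPE('a)"
proof -
  have p: "CHAR('a) > 1" using ff_CHAR_prime[where 'a='a] prime_gt_1_nat by blast
  obtain n where n: "card (UNIV :: 'a set) = CHAR('a) ^ n" using card_ff_prime_power by blast
  have "\<exists>!n. card (UNIV :: 'a set) = CHAR('a) ^ n"
    using n p by (auto intro!: ex1I[of _ n] simp: power_inject_exp)
  then show ?thesis unfolding fq_exp_def by (rule theI')
qed

lemma ff_pow_card: "(x::'a::{field,finite}) ^ card (UNIV :: 'a set) = x"
proof (cases "x = 0")
  case True
  then show ?thesis by (simp add: finite_UNIV_card_ge_0)
next
  case False
  define U where "U = (UNIV :: 'a set) - {0}"
  have fin: "finite U" by (simp add: U_def)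
  have bij: "bij_betw (\<lambda>y. x * y) U U"
  proof (rule bij_betw_imageI)
    show "inj_on (\<lambda>y. x * y) U" using False by (auto simp: inj_on_def)
    show "(\<lambda>y. x * y) ` U = U"
    proof
      show "(\<lambda>y. x * y) ` U \<subseteq> U" using False by (auto simp: U_def)
      show "U \<subseteq> (\<lambda>y. x * y) ` U"
      proof
        fix y assume "y \<in> U"
        then have "y / x \<in> U" "y = x * (y / x)" using False by (auto simp: U_def)
        then show "y \<in> (\<lambda>y. x * y) ` U" by blast
      qed
    qed
  qed
  have "(\<Prod>y\<in>U. x * y) = (\<Prod>y\<in>U. y)" by (rule prod.reindex_bij_betw[OF bij])
  then have "x ^ card U * (\<Prod>y\<in>U. y) = 1 * (\<Prod>y\<in>U. y)" by (simp add: prod.distrib)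
  moreover have "(\<Prod>y\<in>U. y) \<noteq> 0" using fin by (simp add: U_def)
  ultimately have "x ^ card U = 1" by (metis mult_right_cancel)
  moreover have "card (UNIV :: 'a set) = Suc (card U)"
    unfolding U_def by (simp add: card_Diff_singleton_if finite_UNIV_card_ge_0 Suc_diff_1)
  ultimately show ?thesis by simp
qed

lemma ff_pow_q: "(x::'a::{field,finite}) ^ (CHAR('a) ^ fq_exp TYPE('a)) = x"
  using ff_pow_card[of x] by (simp add: fq_exp)

lemma prime_subfield_iff: "(y::'a::{field,finite}) \<in> prime_subfield \<longleftrightarrow> y ^ CHAR('a) = y"
proof
  assume "y \<in> prime_subfield"
  then show "y ^ CHAR('a) = y" by (auto simp: prime_subfield_def of_nat_frob)
next
  assume y: "y ^ CHAR('a) = y"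
  define p where "p = CHAR('a)"
  have p2: "p \<ge> 2" using ff_CHAR_prime[where 'a='a] prime_ge_2_nat p_def by blast
  define P :: "'a poly" where "P = monom 1 p - [:0,1:]"
  have c01: "coeff [:0,1::'a:] p = 0" by (rule coeff_eq_0) (use p2 in simp)
  have cP: "coeff P p = 1" by (simp add: P_def coeff_monom c01)
  then have P0: "P \<noteq> 0" by auto
  have dP: "degree P \<le> p" unfolding P_def
    using p2 by (intro degree_diff_le) (auto simp: degree_monom_eq)
  have polyP: "poly P z = z ^ p - z" for z by (simp add: P_def poly_monom)
  define R where "R = {z. poly P z = 0}"
  have finR: "finite R" unfolding R_def using P0 by (rule poly_roots_finite)
  have cR: "card R \<le> p" using card_poly_roots_bound[OF P0] dP unfolding R_def by linarith
  define S where "S = (of_nat ` {..<p} :: 'a set)"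
  have SR: "S \<subseteq> R" unfolding S_def R_def polyP using of_nat_frob p_def by auto
  have injS: "inj_on (of_nat :: nat \<Rightarrow> 'a) {..<p}"
  proof (rule inj_onI)
    fix i j assume "i \<in> {..<p}" "j \<in> {..<p}" "(of_nat i :: 'a) = of_nat j"
    then show "i = j" by (auto simp: of_nat_eq_iff_cong_CHAR cong_def p_def)
  qed
  have cS: "card S = p" unfolding S_def using injS by (simp add: card_image)
  have "S = R" using card_subset_eq[OF finR SR] cS cR card_mono[OF finR SR] by linarith
  moreover have "y \<in> R" unfolding R_def polyP using y p_def by simp
  ultimately show "y \<in> prime_subfield" unfolding S_def prime_subfield_def by auto
qed

lemma Fp_divide: "(s::'a::{field,finite}) \<in> prime_subfield \<Longrightarrow> t \<in> prime_subfield \<Longrightarrow> s / t \<in> prime_subfield"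
  by (simp add: prime_subfield_iff power_divide)

lemma Fp_pow: "(s::'a::{field,finite}) \<in> prime_subfield \<Longrightarrow> s ^ (CHAR('a) ^ i) = s"
proof (induction i)
  case 0 then show ?case by simp
next
  case (Suc i)
  have "s ^ (CHAR('a) ^ Suc i) = (s ^ (CHAR('a) ^ i)) ^ CHAR('a)"
    by (simp add: power_mult[symmetric] mult.commute)
  also have "\<dots> = s" using Suc by (simp add: prime_subfield_iff)
  finally show ?case .
qed

lemma trace_Fp: "trace_fq (x::'a::{field,finite}) \<in> prime_subfield"
proof -
  define p where "p = CHAR('a)"
  define n where "n = fq_exp TYPE('a)"
  define f where "f i = x ^ (p ^ i)" for i
  have "trace_fq x ^ p = (\<Sum>i<n. f i ^ p)"
    unfolding trace_fq_def p_def n_def f_def by (rule freshmans_dream_sum[OF ff_CHAR_prime refl])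
  also have "\<dots> = (\<Sum>i<n. f (Suc i))"
    by (simp add: f_def power_mult[symmetric] mult.commute)
  also have "\<dots> = (\<Sum>i<n. f i)"
  proof -
    have "(\<Sum>i<Suc n. f i) = f 0 + (\<Sum>i<n. f (Suc i))" by (rule sum.lessThan_Suc_shift)
    moreover have "(\<Sum>i<Suc n. f i) = (\<Sum>i<n. f i) + f n" by simp
    moreover have "f n = f 0" using ff_pow_q[of x] by (simp add: f_def p_def n_def)
    ultimately show ?thesis by (simp add: add.commute)
  qed
  finally show ?thesis unfolding prime_subfield_iff trace_fq_def f_def p_def n_def .
qed

lemma trace_add: "trace_fq ((x::'a::{field,finite}) + y) = trace_fq x + trace_fq y"
  unfolding trace_fq_def by (simp add: frob_add' sum.distrib)

lemma trace_smult: "(s::'a::{field,finite}) \<in> prime_subfield \<Longrightarrow> trace_fq (s * x) = s * trace_fq x"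
  unfolding trace_fq_def by (simp add: power_mult_distrib Fp_pow sum_distrib_left)

lemma trace_0: "trace_fq (0::'a::{field,finite}) = 0"
  unfolding trace_fq_def by (intro sum.neutral) (simp add: power_0_left prime_gt_0_nat[OF ff_CHAR_prime])

lemma fq_exp_pos: "fq_exp TYPE('a::{field,finite}) > 0"
proof (rule ccontr)
  assume "\<not> ?thesis"
  then have "card (UNIV :: 'a set) = 1" using fq_exp[where 'a='a] by simp
  moreover have "card (UNIV :: 'a set) \<ge> card {0::'a, 1}" by (rule card_mono) auto
  ultimately show False by simp
qed

lemma trace_nonzero: "\<exists>x::'a::{field,finite}. trace_fq x \<noteq> 0"
proof (rule ccontr)
  assume H: "\<not> ?thesis"
  define p where "p = CHAR('a)"
  define n where "n = fq_exp TYPE('a)"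
  have p2: "p \<ge> 2" using ff_CHAR_prime[where 'a='a] prime_ge_2_nat p_def by blast
  have n0: "n > 0" using fq_exp_pos n_def by simp
  define T :: "'a poly" where "T = (\<Sum>i<n. monom 1 (p ^ i))"
  have polyT: "poly T x = trace_fq x" for x
    by (simp add: T_def poly_sum poly_monom trace_fq_def p_def n_def)
  have "coeff T (p ^ (n - 1)) = (\<Sum>i<n. if p ^ i = p ^ (n - 1) then 1 else 0)"
    by (simp add: T_def coeff_sum coeff_monom)
  also have "\<dots> = (\<Sum>i\<in>{n - 1}. 1)"
    by (rule sum.mono_neutral_cong_right) (use n0 p2 in \<open>auto simp: power_inject_exp\<close>)
  finally have cT: "coeff T (p ^ (n - 1)) = 1" by simp
  then have T0: "T \<noteq> 0" by auto
  have dT: "degree T \<le> p ^ (n - 1)" unfolding T_def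
  proof (rule degree_sum_le)
    fix i assume "i \<in> {..<n}"
    then have "p ^ i \<le> p ^ (n - 1)" using p2 by (intro power_increasing) auto
    then show "degree (monom (1::'a) (p ^ i)) \<le> p ^ (n - 1)" by (simp add: degree_monom_eq)
  qed auto
  have "{x. poly T x = 0} = UNIV" using H polyT by auto
  then have "card (UNIV :: 'a set) \<le> p ^ (n - 1)" using card_poly_roots_bound[OF T0] dT by simp
  moreover have "card (UNIV :: 'a set) = p ^ n" using fq_exp[where 'a='a] by (simp add: p_def n_def)
  moreover have "p ^ (n - 1) < p ^ n" using p2 n0 by (intro power_strict_increasing) auto
  ultimately show False by simp
qed

definition Psi :: "('a::{field,finite} \<Rightarrow> complex) \<Rightarrow> 'a \<Rightarrow> complex" where
  "Psi \<psi> x = \<psi> (trace_fq x)"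

lemma zero_Fp: "0 \<in> prime_subfield"
  by (simp add: prime_subfield_def image_iff) (metis of_nat_0)

lemma psi_0:
  assumes "nontrivial_additive_char \<psi>" shows "\<psi> (0::'a::{field,finite}) = 1"
proof -
  have "\<psi> (0 + 0) = \<psi> 0 * \<psi> 0" "\<psi> (0::'a) \<noteq> 0"
    using assms zero_Fp unfolding nontrivial_additive_char_def by blast+
  then show ?thesis by simp
qed

lemma Psi_add:
  assumes "nontrivial_additive_char \<psi>" shows "Psi \<psi> ((x::'a::{field,finite}) + y) = Psi \<psi> x * Psi \<psi> y"
  using assms trace_Fp unfolding Psi_def nontrivial_additive_char_def trace_add by blast

lemma Psi_0:
  assumes "nontrivial_additive_char \<psi>" shows "Psi \<psi> (0::'a::{field,finite}) = 1"
  using psi_0[OF assms] by (simp add: Psi_def trace_0)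

lemma Psi_nz:
  assumes "nontrivial_additive_char \<psi>" shows "Psi \<psi> (x::'a::{field,finite}) \<noteq> 0"
  using assms trace_Fp unfolding Psi_def nontrivial_additive_char_def by blast

lemma Psi_uminus:
  assumes "nontrivial_additive_char \<psi>" shows "Psi \<psi> (- (x::'a::{field,finite})) * Psi \<psi> x = 1"
  using Psi_add[OF assms, of "-x" x] Psi_0[OF assms] by simp

lemma Psi_diff:
  assumes "nontrivial_additive_char \<psi>"
  shows "Psi \<psi> ((x::'a::{field,finite}) - y) = Psi \<psi> x / Psi \<psi> y"
proof -
  have "Psi \<psi> x = Psi \<psi> (x - y) * Psi \<psi> y" using Psi_add[OF assms, of "x - y" y] by simp
  then show ?thesis using Psi_nz[OF assms, of y] by (simp add: field_simps)
qed

lemma Psi_of_nat: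
  assumes "nontrivial_additive_char \<psi>" shows "Psi \<psi> (of_nat k * (x::'a::{field,finite})) = Psi \<psi> x ^ k"
proof (induction k)
  case 0 then show ?case using Psi_0[OF assms] by simp
next
  case (Suc k)
  have "Psi \<psi> (of_nat (Suc k) * x) = Psi \<psi> (x + of_nat k * x)" by (simp add: algebra_simps)
  also have "\<dots> = Psi \<psi> x * Psi \<psi> (of_nat k * x)" by (rule Psi_add[OF assms])
  finally show ?case using Suc by simp
qed

lemma Psi_pow_p:
  assumes "nontrivial_additive_char \<psi>" shows "Psi \<psi> (x::'a::{field,finite}) ^ CHAR('a) = 1"
  using Psi_of_nat[OF assms, of "CHAR('a)" x] Psi_0[OF assms] by simp

lemma Psi_nontriv:
  assumes "nontrivial_additive_char \<psi>" shows "\<exists>x::'a::{field,finite}. Psi \<psi> x \<noteq> 1"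
proof -
  obtain s where s: "s \<in> prime_subfield" "\<psi> (s::'a) \<noteq> 1"
    using assms unfolding nontrivial_additive_char_def by blast
  obtain x0 :: 'a where x0: "trace_fq x0 \<noteq> 0" using trace_nonzero by blast
  define t where "t = trace_fq x0"
  have "s / t \<in> prime_subfield" using Fp_divide[OF s(1)] trace_Fp t_def by blast
  from trace_smult[OF this, of x0] have "trace_fq (s / t * x0) = s / t * trace_fq x0" .
  then have "trace_fq (s / t * x0) = s" using x0 t_def by simp
  then show ?thesis using s by (intro exI[of _ "s / t * x0"]) (simp add: Psi_def)
qed

lemma char_sum_zero:
  fixes \<phi> :: "'b::ab_group_add \<Rightarrow> complex"
  assumes fin: "finite V" and add: "\<And>u v. u \<in> V \<Longrightarrow> v \<in> V \<Longrightarrow> u + v \<in> V"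
    and neg: "\<And>u. u \<in> V \<Longrightarrow> - u \<in> V"
    and hom: "\<And>u v. u \<in> V \<Longrightarrow> v \<in> V \<Longrightarrow> \<phi> (u + v) = \<phi> u * \<phi> v"
    and v0: "v0 \<in> V" "\<phi> v0 \<noteq> 1"
  shows "(\<Sum>u\<in>V. \<phi> u) = 0"
proof -
  have bij: "bij_betw (\<lambda>u. u + v0) V V"
  proof (rule bij_betw_imageI)
    show "inj_on (\<lambda>u. u + v0) V" by (auto simp: inj_on_def)
    show "(\<lambda>u. u + v0) ` V = V"
    proof
      show "(\<lambda>u. u + v0) ` V \<subseteq> V" using add v0 by auto
      show "V \<subseteq> (\<lambda>u. u + v0) ` V"
      proof
        fix w assume w: "w \<in> V"
        have "w + - v0 \<in> V" using add[OF w neg[OF v0(1)]] .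
        moreover have "w = (w + - v0) + v0" by simp
        ultimately show "w \<in> (\<lambda>u. u + v0) ` V" by blast
      qed
    qed
  qed
  have "(\<Sum>u\<in>V. \<phi> u) = (\<Sum>u\<in>V. \<phi> (u + v0))"
    using sum.reindex_bij_betw[OF bij, of \<phi>] by simp
  also have "\<dots> = (\<Sum>u\<in>V. \<phi> u * \<phi> v0)" using hom v0 by (intro sum.cong) auto
  also have "\<dots> = (\<Sum>u\<in>V. \<phi> u) * \<phi> v0" by (simp add: sum_distrib_right)
  finally have "(\<Sum>u\<in>V. \<phi> u) * (1 - \<phi> v0) = 0" by (simp add: algebra_simps)
  then show ?thesis using v0 by simp
qed




section \<open>Coprimality in polynomial rings over a field\<close>

lemma bezout_poly:
  fixes a b :: "'a::field poly"
  assumes cop: "coprime a b"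
  shows "\<exists>s t. s * a + t * b = 1"
proof -
  define I where "I = {s * a + t * b | s t. True}"
  have ab: "a \<noteq> 0 \<or> b \<noteq> 0" using cop by auto
  have aI: "a \<in> I" unfolding I_def by (rule CollectI, rule exI[of _ 1], rule exI[of _ 0]) simp
  have bI: "b \<in> I" unfolding I_def by (rule CollectI, rule exI[of _ 0], rule exI[of _ 1]) simp
  have "\<exists>m. m \<in> I \<and> m \<noteq> 0" using ab aI bI by blast
  then obtain m0 where "m0 \<in> I \<and> m0 \<noteq> 0" by blast
  from ex_has_least_nat[of "\<lambda>m. m \<in> I \<and> m \<noteq> 0", OF this, of degree]
  obtain m where m: "m \<in> I" "m \<noteq> 0" and mmin: "\<And>m'. m' \<in> I \<Longrightarrow> m' \<noteq> 0 \<Longrightarrow> degree m \<le> degree m'"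
    by blast
  have closed: "x - c * y \<in> I" if "x \<in> I" "y \<in> I" for x y c
  proof -
    from that obtain s1 t1 s2 t2 where "x = s1 * a + t1 * b" "y = s2 * a + t2 * b"
      unfolding I_def by blast
    then have "x - c * y = (s1 - c * s2) * a + (t1 - c * t2) * b" by (simp add: algebra_simps)
    then show ?thesis unfolding I_def by blast
  qed
  have dvd: "m dvd x" if "x \<in> I" for x
  proof (rule ccontr)
    assume nd: "\<not> m dvd x"
    then have r0: "x mod m \<noteq> 0" by (simp add: mod_eq_0_iff_dvd)
    have "x mod m = x - (x div m) * m" by (simp add: minus_div_mult_eq_mod)
    then have "x mod m \<in> I" using closed[OF that m(1)] by simp
    then have "degree m \<le> degree (x mod m)" using mmin r0 by blast
    moreover have "degree (x mod m) < degree m" using degree_mod_less'[OF m(2) r0] .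
    ultimately show False by simp
  qed
  have "is_unit m" using cop dvd[OF aI] dvd[OF bI] unfolding coprime_def by blast
  then obtain k where k: "1 = m * k" by (rule dvdE)
  from m(1) obtain s t where "m = s * a + t * b" unfolding I_def by blast
  then have "(k * s) * a + (k * t) * b = 1" using k by (simp add: algebra_simps)
  then show ?thesis by blast
qed

lemma bezout_imp_coprime:
  fixes a b :: "'a::field poly"
  assumes "s * a + t * b = 1" shows "coprime a b"
proof (rule coprimeI)
  fix c assume "c dvd a" "c dvd b"
  then have "c dvd s * a + t * b" by simp
  then show "is_unit c" using assms by simp
qed

lemma coprime_dvd_cancel:
  fixes a b c :: "'a::field poly"
  assumes "coprime a b" "a dvd b * c" shows "a dvd c"
proof -
  obtain s t where st: "s * a + t * b = 1" using bezout_poly[OF assms(1)] by blast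
  have "c = (s * a + t * b) * c" using st by simp
  also have "\<dots> = s * a * c + t * (b * c)" by (simp add: algebra_simps)
  finally have "c = s * a * c + t * (b * c)" .
  moreover have "a dvd s * a * c + t * (b * c)" using assms(2) by simp
  ultimately show ?thesis by simp
qed

lemma coprime_mult_l:
  fixes a b c :: "'a::field poly"
  assumes "coprime a c" "coprime b c" shows "coprime (a * b) c"
proof -
  obtain s1 t1 where 1: "s1 * a + t1 * c = 1" using bezout_poly[OF assms(1)] by blast
  obtain s2 t2 where 2: "s2 * b + t2 * c = 1" using bezout_poly[OF assms(2)] by blast
  have "(s1 * a + t1 * c) * (s2 * b + t2 * c) = 1" using 1 2 by simp
  then have "(s1 * s2) * (a * b) + (s1 * a * t2 + t1 * (s2 * b + t2 * c)) * c = 1"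
    by (simp add: algebra_simps)
  then show ?thesis by (rule bezout_imp_coprime)
qed

lemma coprime_pow_l:
  fixes a c :: "'a::field poly"
  assumes "coprime a c" shows "coprime (a ^ n) c"
  by (induction n) (simp_all add: coprime_mult_l assms)

lemma coprime_dvd_l:
  fixes a b c :: "'a::field poly"
  assumes "coprime a c" "b dvd a" shows "coprime b c"
  using assms unfolding coprime_def by (meson dvd_trans)

lemma coprime_dvd_r:
  fixes a b c :: "'a::field poly"
  assumes "coprime c a" "b dvd a" shows "coprime c b"
  using assms unfolding coprime_def by (meson dvd_trans)

lemma coprime_sq_r:
  fixes a c :: "'a::field poly"
  shows "coprime a (c ^ 2) \<longleftrightarrow> coprime a c"
proof
  assume "coprime a (c ^ 2)" then show "coprime a c" by (rule coprime_dvd_r) (simp add: power2_eq_square)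
next
  assume "coprime a c"
  then have "coprime (c ^ 2) a" using coprime_pow_l coprime_commute by blast
  then show "coprime a (c ^ 2)" by (simp add: coprime_commute)
qed

lemma irr_common_factor:
  fixes a b :: "'a::field poly"
  assumes "\<not> coprime a b" "b \<noteq> 0"
  shows "\<exists>P. irreducible P \<and> monic P \<and> P dvd a \<and> P dvd b"
proof -
  obtain c where c: "c dvd a" "c dvd b" "\<not> is_unit c" using assms(1) unfolding coprime_def by blast
  have "c \<noteq> 0" using c(2) assms(2) by auto
  then have "degree c > 0" using c(3) is_unit_iff_degree by blast
  from irreducible_monic_factor[OF this] obtain P r where "irreducible P" "c = P * r" "monic P" by blast
  then have "P dvd c" by simp
  then show ?thesis using c \<open>irreducible P\<close> \<open>monic P\<close> by (blast intro: dvd_trans)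
qed

lemma irr_dvd_mult:
  fixes P :: "'a::field poly"
  assumes "irreducible P" "P dvd a * b" shows "P dvd a \<or> P dvd b"
  using prime_elem_dvd_mult_iff[OF field_poly_irreducible_imp_prime[OF assms(1)]] assms(2) by blast

lemma irr_dvd_pow:
  fixes P :: "'a::field poly"
  assumes "irreducible P" "P dvd a ^ n" shows "P dvd a"
  using prime_elem_dvd_power[OF field_poly_irreducible_imp_prime[OF assms(1)] assms(2)] .

lemma irr_degree:
  fixes P :: "'a::field poly"
  assumes "irreducible P" shows "degree P > 0" "P \<noteq> 0"
  using assms is_unit_iff_degree unfolding irreducible_def by auto

lemma sqf_nonzero:
  fixes g :: "'a::field poly"
  assumes "squarefree g" shows "g \<noteq> 0"
proof
  assume "g = 0"
  then have "[:0,1::'a:] dvd 1" using assms unfolding squarefree_def by simp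
  then show False using is_unit_iff_degree[of "[:0,1::'a:]"] by simp
qed

lemma sqf_dvd:
  fixes g h :: "'a::field poly"
  assumes "squarefree g" "h dvd g" shows "squarefree h"
  using assms unfolding squarefree_def by (meson dvd_trans)

lemma sqf_coprime_factor:
  fixes g P k :: "'a::field poly"
  assumes "squarefree g" "g = P * k" shows "coprime P k"
proof (rule ccontr)
  assume nc: "\<not> coprime P k"
  have "k \<noteq> 0" using sqf_nonzero[OF assms(1)] assms(2) by auto
  then obtain Q where Q: "irreducible Q" "Q dvd P" "Q dvd k" using irr_common_factor[OF nc] by blast
  then have "Q ^ 2 dvd g" using assms(2) by (simp add: power2_eq_square mult_dvd_mono)
  then have "Q dvd 1" using assms(1) unfolding squarefree_def by blast
  then show False using Q(1) unfolding irreducible_def by blast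
qed

lemma sqf_dvd_pow:
  fixes g y :: "'a::field poly"
  assumes "squarefree g" "g dvd y ^ n" "n > 0"
  shows "g dvd y"
  using assms
proof (induction "degree g" arbitrary: g y rule: less_induct)
  case less
  have g0: "g \<noteq> 0" using sqf_nonzero[OF less.prems(1)] .
  show ?case
  proof (cases "degree g = 0")
    case True
    then have "is_unit g" using g0 is_unit_iff_degree by blast
    then show ?thesis by (simp add: unit_imp_dvd)
  next
    case False
    then obtain P g1 where P: "irreducible P" "g = P * g1" "monic P"
      using irreducible_monic_factor[of g] by auto
    have P0: "P \<noteq> 0" using irr_degree[OF P(1)] by simp
    have "P dvd y ^ n" using less.prems(2) P(2) by (metis dvd_mult_left)
    then have "P dvd y" by (rule irr_dvd_pow[OF P(1)])
    then obtain y1 where y1: "y = P * y1" by (rule dvdE)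
    obtain m where m: "n = Suc m" using less.prems(3) by (cases n) auto
    have "P * g1 dvd P * (P ^ m * y1 ^ n)" using less.prems(2) P(2) y1 m
      by (simp add: power_mult_distrib algebra_simps)
    then have g1d: "g1 dvd P ^ m * y1 ^ n" using P0 by (simp add: dvd_times_left_cancel_iff)
    have "coprime P g1" using sqf_coprime_factor[OF less.prems(1) P(2)] .
    then have "coprime (P ^ m) g1" by (rule coprime_pow_l)
    then have "coprime g1 (P ^ m)" by (simp add: coprime_commute)
    then have "g1 dvd y1 ^ n" using g1d coprime_dvd_cancel by blast
    moreover have "squarefree g1" using sqf_dvd[OF less.prems(1)] P(2) by simp
    moreover have "degree g1 < degree g"
    proof -
      have "g1 \<noteq> 0" using g0 P(2) by auto
      then have "degree g = degree P + degree g1" using P(2) P0 by (simp add: degree_mult_eq)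
      then show ?thesis using irr_degree[OF P(1)] by simp
    qed
    ultimately have "g1 dvd y1" using less.hyps less.prems(3) by blast
    then show ?thesis using P(2) y1 by (simp add: mult_dvd_mono)
  qed
qed

lemma ring_frob_diff:
  fixes x y :: "'b::comm_ring_1"
  assumes "prime CHAR('b)"
  shows "(x - y) ^ CHAR('b) = x ^ CHAR('b) - y ^ CHAR('b)"
proof -
  have "x ^ CHAR('b) = ((x - y) + y) ^ CHAR('b)" by simp
  also have "\<dots> = (x - y) ^ CHAR('b) + y ^ CHAR('b)" by (rule freshmans_dream[OF assms refl])
  finally show ?thesis by simp
qed

lemma poly_frob_diff:
  fixes x y :: "'a::{field,finite} poly"
  shows "(x - y) ^ CHAR('a) = x ^ CHAR('a) - y ^ CHAR('a)"
  using ring_frob_diff[of x y] ff_CHAR_prime[where 'a='a] by simp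

lemma pderiv_zero_pth_power:
  fixes P :: "'a::{field,finite} poly"
  assumes "pderiv P = 0"
  shows "\<exists>Q. P = Q ^ CHAR('a)"
proof -
  define p where "p = CHAR('a)"
  have p2: "p \<ge> 2" using ff_CHAR_prime[where 'a='a] prime_ge_2_nat p_def by blast
  have "surj (\<lambda>x::'a. x ^ p)"
    by (rule finite_UNIV_inj_surj) (auto simp: inj_def p_def intro: frob_inj)
  then have "\<forall>a::'a. \<exists>b. b ^ p = a" by (metis surjD)
  from choice[OF this] obtain rt :: "'a \<Rightarrow> 'a" where rt: "\<And>a. rt a ^ p = a" by blast
  have cz: "coeff P m = 0" if "\<not> p dvd m" for m
  proof (cases m)
    case 0 then show ?thesis using that by simp
  next
    case (Suc k)
    have "coeff (pderiv P) k = 0" using assms by simp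
    then have "of_nat (Suc k) * coeff P (Suc k) = (0::'a)" by (simp add: coeff_pderiv)
    moreover have "(of_nat (Suc k) :: 'a) \<noteq> 0"
      using that Suc of_nat_eq_0_iff_char_dvd[of "Suc k", where 'a='a] unfolding p_def by blast
    ultimately show ?thesis using Suc by simp
  qed
  define Q where "Q = (\<Sum>i\<le>degree P. monom (rt (coeff P (i * p))) i)"
  have "Q ^ p = (\<Sum>i\<le>degree P. monom (rt (coeff P (i * p))) i ^ p)"
  proof -
    have "prime CHAR('a poly)" using ff_CHAR_prime[where 'a='a] by simp
    from freshmans_dream_sum[OF this refl, of "\<lambda>i. monom (rt (coeff P (i * p))) i" "{..degree P}"]
    show ?thesis unfolding Q_def p_def by simp
  qed
  also have "\<dots> = (\<Sum>i\<le>degree P. monom (coeff P (i * p)) (i * p))"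
    by (simp add: monom_power rt)
  also have "\<dots> = P"
  proof (rule poly_eqI)
    fix m
    have "coeff (\<Sum>i\<le>degree P. monom (coeff P (i * p)) (i * p)) m =
          (\<Sum>i\<le>degree P. if i * p = m then coeff P (i * p) else 0)"
      by (simp add: coeff_sum coeff_monom)
    also have "\<dots> = coeff P m"
    proof (cases "p dvd m")
      case True
      then obtain j where j: "m = j * p" by (metis dvd_def mult.commute)
      have "(\<Sum>i\<le>degree P. if i * p = m then coeff P (i * p) else 0) =
            (\<Sum>i\<le>degree P. if j = i then coeff P (i * p) else 0)"
        using p2 j by (intro sum.cong) auto
      also have "\<dots> = (if j \<in> {..degree P} then coeff P (j * p) else 0)"
        by (rule sum.delta') simp
      also have "\<dots> = coeff P m"
      proof (cases "j \<le> degree P")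
        case False
        have "j \<le> j * p" using p2 by simp
        then have "degree P < m" using j False by linarith
        then show ?thesis using False j by (simp add: coeff_eq_0)
      qed (simp add: j)
      finally show ?thesis .
    next
      case False
      have "(\<Sum>i\<le>degree P. if i * p = m then coeff P (i * p) else 0) = 0"
        using False by (intro sum.neutral) auto
      then show ?thesis using cz[OF False] by simp
    qed
    finally show "coeff (\<Sum>i\<le>degree P. monom (coeff P (i * p)) (i * p)) m = coeff P m" .
  qed
  finally show ?thesis unfolding p_def by (intro exI[of _ Q]) simp
qed

lemma sqf_separable:
  fixes g :: "'a::{field,finite} poly"
  assumes sqf: "squarefree g"
  shows "coprime g (pderiv g)"
proof (rule ccontr)
  assume "\<not> coprime g (pderiv g)"
  then have "\<not> coprime (pderiv g) g" by (simp add: coprime_commute)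
  then obtain P where P: "irreducible P" "P dvd pderiv g" "P dvd g"
    using irr_common_factor sqf_nonzero[OF sqf] by blast
  obtain k where k: "g = P * k" using P(3) by (rule dvdE)
  have cop: "coprime P k" by (rule sqf_coprime_factor[OF sqf k])
  have "pderiv g = P * pderiv k + k * pderiv P" using k by (simp add: pderiv_mult)
  moreover have "P dvd P * pderiv k" by simp
  ultimately have "P dvd k * pderiv P" using P(2) by (simp add: dvd_add_right_iff)
  then have dP: "P dvd pderiv P" using coprime_dvd_cancel[OF cop] by blast
  have "pderiv P = 0"
  proof (rule ccontr)
    assume "pderiv P \<noteq> 0"
    then have "degree P \<le> degree (pderiv P)" using dvd_imp_degree_le[OF dP] by blast
    then show False using irr_degree[OF P(1)] degree_pderiv_le[of P] by linarith
  qed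
  then obtain Q where Q: "P = Q ^ CHAR('a)" using pderiv_zero_pth_power by blast
  have p2: "CHAR('a) \<ge> 2" using ff_CHAR_prime[where 'a='a] prime_ge_2_nat by blast
  have "Q ^ 2 dvd P" unfolding Q using p2 by (rule le_imp_power_dvd)
  then have "Q ^ 2 dvd g" using k by (metis dvd_mult2)
  then have "is_unit Q" using sqf unfolding squarefree_def by blast
  then have "is_unit P" unfolding Q using is_unit_power_iff by blast
  then show False using P(1) unfolding irreducible_def by blast
qed


section \<open>Arithmetic modulo a fixed squarefree monic g\<close>

locale gfix =
  fixes g :: "'a::{field,finite} poly"
  assumes g_monic: "lead_coeff g = 1" and g_sqf: "squarefree g" and g_deg: "degree g \<ge> 1"
begin

lemma g_nz: "g \<noteq> 0" using g_deg by auto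

lemma g_not_unit: "\<not> is_unit g" using g_deg is_unit_iff_degree[OF g_nz] by simp

lemma g_sep: "coprime g (pderiv g)" by (rule sqf_separable[OF g_sqf])

definition V :: "'a poly set" where "V = {u. degree u < degree g}"

lemma finite_V: "finite V"
proof -
  have "V \<subseteq> Poly ` {xs. set xs \<subseteq> UNIV \<and> length xs = degree g}"
  proof
    fix u assume u: "u \<in> V"
    define xs where "xs = coeffs u @ replicate (degree g - length (coeffs u)) 0"
    have "length (coeffs u) \<le> degree g"
      using u by (cases "u = 0") (auto simp: V_def length_coeffs_degree)
    then have "length xs = degree g" by (simp add: xs_def)
    moreover have "Poly xs = u" by (simp add: xs_def Poly_append_replicate_zero)
    ultimately show "u \<in> Poly ` {xs. set xs \<subseteq> UNIV \<and> length xs = degree g}" by blast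
  qed
  moreover have "finite (Poly ` {xs. set xs \<subseteq> (UNIV::'a set) \<and> length xs = degree g})"
    by (intro finite_imageI finite_lists_length_eq) simp
  ultimately show ?thesis by (rule finite_subset)
qed

lemma V_0: "0 \<in> V" using g_deg by (simp add: V_def)
lemma V_add: "u \<in> V \<Longrightarrow> v \<in> V \<Longrightarrow> u + v \<in> V" by (simp add: V_def degree_add_less)
lemma V_uminus: "u \<in> V \<Longrightarrow> - u \<in> V" by (simp add: V_def)
lemma V_smult: "u \<in> V \<Longrightarrow> smult c u \<in> V"
  unfolding V_def using degree_smult_le[of c u] by auto
lemma V_mod: "u mod g \<in> V"
  using degree_mod_less[OF g_nz, of u] g_deg by (auto simp: V_def)
lemma mod_V: "u \<in> V \<Longrightarrow> u mod g = u" by (simp add: V_def mod_poly_less)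
lemma V_dvd: "u \<in> V \<Longrightarrow> g dvd u \<Longrightarrow> u = 0"
  using mod_V[of u] by (simp add: mod_eq_0_iff_dvd[symmetric])

definition lam :: "'a poly \<Rightarrow> 'a" where "lam w = coeff (w mod g) (degree g - 1)"

lemma lam_cong: "[w1 = w2] (mod g) \<Longrightarrow> lam w1 = lam w2"
  by (simp add: lam_def cong_def)

lemma lam_add: "lam (a + b) = lam a + lam b"
  by (simp add: lam_def poly_mod_add_left)

lemma lam_smult: "lam (smult c a) = c * lam a"
  by (simp add: lam_def mod_smult_left)

lemma lam_uminus: "lam (- a) = - lam a"
proof -
  have "- a = smult (-1) a" by simp
  then show ?thesis by (simp only: lam_smult) simp
qed

lemma lam_diff: "lam (a - b) = lam a - lam b"
  using lam_add[of a "- b"] lam_uminus[of b] by simp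

lemma lam_0: "lam 0 = 0" by (simp add: lam_def)

lemma lam_nondeg:
  assumes "\<not> g dvd e"
  shows "\<exists>u\<in>V. lam (e * u) \<noteq> 0"
proof -
  define r where "r = e mod g"
  have r0: "r \<noteq> 0" using assms by (simp add: r_def mod_eq_0_iff_dvd)
  have dr: "degree r < degree g" using degree_mod_less'[OF g_nz] r0 by (simp add: r_def)
  define u :: "'a poly" where "u = monom 1 (degree g - 1 - degree r)"
  have u0: "u \<noteq> 0" by (simp add: u_def)
  have du: "degree u = degree g - 1 - degree r" by (simp add: u_def degree_monom_eq)
  have uV: "u \<in> V" using du g_deg by (simp add: V_def)
  have dru: "degree (r * u) = degree g - 1" using r0 u0 du dr by (simp add: degree_mult_eq)
  have ruV: "r * u \<in> V" using dru g_deg by (simp add: V_def)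
  have "[e * u = r * u] (mod g)" by (simp add: r_def cong_def mod_mult_left_eq)
  then have "lam (e * u) = lam (r * u)" by (rule lam_cong)
  also have "\<dots> = coeff (r * u) (degree g - 1)" by (simp add: lam_def mod_V[OF ruV])
  also have "\<dots> = lead_coeff (r * u)" by (simp add: dru)
  also have "\<dots> = lead_coeff r"
  proof -
    have "lead_coeff u = 1" by (simp add: u_def degree_monom_eq)
    then show ?thesis by (simp add: lead_coeff_mult)
  qed
  finally have "lam (e * u) \<noteq> 0" using r0 by simp
  then show ?thesis using uV by blast
qed

definition cinv :: "'a poly \<Rightarrow> 'a poly" where "cinv c = (SOME v. [c * v = 1] (mod g))"

lemma cinv: assumes "coprime c g" shows "[c * cinv c = 1] (mod g)"
proof -
  obtain s t where st: "s * c + t * g = 1" using bezout_poly[OF assms] by blast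
  have "[c * s = 1] (mod g)"
    unfolding cong_iff_dvd_diff using st by (metis add_diff_cancel_left' dvd_minus_iff dvd_triv_right
      minus_diff_eq mult.commute)
  then show ?thesis unfolding cinv_def by (rule someI)
qed

lemma cinv_unique:
  assumes "[c * v = 1] (mod g)" "[c * w = 1] (mod g)" shows "[v = w] (mod g)"
proof -
  have "[v * (c * w) = v * 1] (mod g)" using assms(2) by (rule cong_scalar_left)
  moreover have "[w * (c * v) = w * 1] (mod g)" using assms(1) by (rule cong_scalar_left)
  moreover have "v * (c * w) = w * (c * v)" by (simp add: algebra_simps)
  ultimately show ?thesis by (metis cong_sym cong_trans mult_1_right)
qed

lemma coprime_cong_g: "[a = b] (mod g) \<Longrightarrow> coprime a g \<longleftrightarrow> coprime b g"
  by (rule coprime_cong_cong_left)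

lemma cinv_cong:
  assumes "coprime a g" "[a = b] (mod g)" shows "[cinv a = cinv b] (mod g)"
proof -
  have cb: "coprime b g" using coprime_cong_g[OF assms(2)] assms(1) by simp
  have "[a * cinv b = b * cinv b] (mod g)" using assms(2) by (rule cong_scalar_right)
  then have "[a * cinv b = 1] (mod g)" using cinv[OF cb] by (rule cong_trans)
  then show ?thesis using cinv[OF assms(1)] cinv_unique by blast
qed

lemma cinv_mult:
  assumes "coprime a g" "coprime b g" shows "[cinv (a * b) = cinv a * cinv b] (mod g)"
proof -
  have cab: "coprime (a * b) g" using assms by (rule coprime_mult_l)
  have "[(a * cinv a) * (b * cinv b) = 1 * 1] (mod g)" using cinv[OF assms(1)] cinv[OF assms(2)]
    by (rule cong_mult)
  then have "[(a * b) * (cinv a * cinv b) = 1] (mod g)" by (simp add: algebra_simps)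
  then show ?thesis using cinv[OF cab] cinv_unique by blast
qed

definition T :: "'a poly \<Rightarrow> 'a poly \<Rightarrow> 'a" where "T h c = - lam (h * pderiv c * cinv c)"

lemma pderiv_cong:
  assumes "[a = b] (mod g ^ 2)" shows "[pderiv a = pderiv b] (mod g)"
proof -
  obtain k where k: "b - a = g ^ 2 * k" using assms unfolding cong_iff_dvd_diff
    by (metis cong_iff_dvd_diff cong_sym dvdE)
  have "pderiv b - pderiv a = pderiv (g ^ 2 * k)" using k by (metis pderiv_diff)
  also have "\<dots> = g * (g * pderiv k + 2 * k * pderiv g)"
    by (simp add: power2_eq_square pderiv_mult algebra_simps)
  finally have "g dvd pderiv b - pderiv a" by simp
  then show ?thesis unfolding cong_iff_dvd_diff by (metis cong_iff_dvd_diff cong_sym)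
qed

lemma cong_g2_g: assumes "[a = b] (mod g ^ 2)" shows "[a = b] (mod g)"
proof -
  have "g dvd g ^ 2" by (simp add: power2_eq_square)
  from cong_dvd_mono_modulus[OF assms this] show ?thesis .
qed

lemma T_cong2:
  assumes "coprime a g" "[a = b] (mod g ^ 2)" shows "T h a = T h b"
proof -
  have "[h * pderiv a * cinv a = h * pderiv b * cinv b] (mod g)"
    using pderiv_cong[OF assms(2)] cinv_cong[OF assms(1) cong_g2_g[OF assms(2)]]
    by (intro cong_mult cong_refl)
  then show ?thesis unfolding T_def by (simp add: lam_cong)
qed

lemma T_mult:
  assumes "coprime a g" "coprime b g" shows "T h (a * b) = T h a + T h b"
proof -
  have "[h * pderiv (a * b) * cinv (a * b) = h * pderiv (a * b) * (cinv a * cinv b)] (mod g)"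
    using cinv_mult[OF assms] by (intro cong_mult cong_refl)
  also have "h * pderiv (a * b) * (cinv a * cinv b) =
      (h * pderiv b * cinv b) * (a * cinv a) + (h * pderiv a * cinv a) * (b * cinv b)"
    by (simp add: pderiv_mult algebra_simps)
  also have "[\<dots> = (h * pderiv b * cinv b) * 1 + (h * pderiv a * cinv a) * 1] (mod g)"
    using cinv[OF assms(1)] cinv[OF assms(2)] by (intro cong_add cong_mult cong_refl)
  finally have "[h * pderiv (a * b) * cinv (a * b) = h * pderiv a * cinv a + h * pderiv b * cinv b] (mod g)"
    by (simp add: add.commute)
  then show ?thesis unfolding T_def by (simp add: lam_cong lam_add)
qed

lemma coprime_one_plus: "coprime (1 + g * u) g"
  by (rule bezout_imp_coprime[of 1 _ "- u"]) (simp add: algebra_simps)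

lemma T_one_plus: "T h (1 + g * u) = - lam (h * pderiv g * u)"
proof -
  have c: "coprime (1 + g * u) g" by (rule coprime_one_plus)
  have "[(1 + g * u) * 1 = 1] (mod g)" by (simp add: cong_def)
  then have ci: "[cinv (1 + g * u) = 1] (mod g)" using cinv[OF c] cinv_unique cong_sym by blast
  have "pderiv (1 + g * u) = g * pderiv u + u * pderiv g" by (simp add: pderiv_add pderiv_mult)
  then have pd: "[pderiv (1 + g * u) = u * pderiv g] (mod g)" by (simp add: cong_def)
  have "[h * pderiv (1 + g * u) * cinv (1 + g * u) = h * (u * pderiv g) * 1] (mod g)"
    using pd ci by (intro cong_mult cong_refl)
  then show ?thesis unfolding T_def by (simp add: lam_cong algebra_simps)
qed

lemma T_const: "T h [:a:] = 0"
  by (simp add: T_def pderiv_pCons lam_0)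

lemma coprime_g2: "coprime a (g ^ 2) \<longleftrightarrow> coprime a g" by (rule coprime_sq_r)

lemma frob_mod_g:
  assumes "coprime c g"
  shows "\<exists>b. coprime b g \<and> [b ^ CHAR('a) = c] (mod g)"
proof -
  define F where "F u = u ^ CHAR('a) mod g" for u
  have p1: "CHAR('a) > 0" using ff_CHAR_prime[where 'a='a] prime_gt_0_nat by blast
  have FV: "F ` V \<subseteq> V" by (auto simp: F_def V_mod)
  have inj: "inj_on F V"
  proof (rule inj_onI)
    fix u w assume u: "u \<in> V" and w: "w \<in> V" and eq: "F u = F w"
    then have "g dvd u ^ CHAR('a) - w ^ CHAR('a)"
      by (simp add: F_def mod_eq_dvd_iff)
    then have "g dvd (u - w) ^ CHAR('a)" by (simp add: poly_frob_diff)
    then have "g dvd u - w" using sqf_dvd_pow[OF g_sqf _ p1] by blast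
    moreover have "u - w \<in> V" using V_add[OF u V_uminus[OF w]] by simp
    ultimately show "u = w" using V_dvd by fastforce
  qed
  have "F ` V = V" by (rule endo_inj_surj[OF finite_V FV inj])
  then have "c mod g \<in> F ` V" using V_mod by simp
  then obtain u where "u \<in> V" "u ^ CHAR('a) mod g = c mod g" by (auto simp: F_def)
  then have cu: "[u ^ CHAR('a) = c] (mod g)" by (simp add: cong_def)
  then have "coprime (u ^ CHAR('a)) g" using coprime_cong_g assms by blast
  then have "coprime u g" by (rule coprime_dvd_l) (use p1 in \<open>simp add: dvd_power\<close>)
  then show ?thesis using cu by blast
qed

end




interpretation to_ac_hom: field_hom "to_ac :: 'a::field \<Rightarrow> 'a alg_closure"
  by unfold_locales auto

interpretation to_ac_phom: map_poly_inj_idom_divide_hom "to_ac :: 'a::field \<Rightarrow> 'a alg_closure"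
  by unfold_locales

section \<open>Multisets of roots\<close>

lemma sum_count_mset:
  fixes f :: "'b \<Rightarrow> 'c::semiring_1"
  assumes "finite S" "set_mset A \<subseteq> S"
  shows "(\<Sum>x\<in>S. of_nat (count A x) * f x) = (\<Sum>x\<in>#A. f x)"
  using assms(2)
proof (induction A)
  case empty then show ?case by simp
next
  case (add y A)
  have yS: "y \<in> S" using add.prems by simp
  have "(\<Sum>x\<in>S. of_nat (count (add_mset y A) x) * f x) =
        (\<Sum>x\<in>S. of_nat (count A x) * f x + (if y = x then f x else 0))"
    by (intro sum.cong) (auto simp: algebra_simps)
  also have "\<dots> = (\<Sum>x\<in>S. of_nat (count A x) * f x) + (\<Sum>x\<in>S. if y = x then f x else 0)"
    by (rule sum.distrib)
  finally have eq: "(\<Sum>x\<in>S. of_nat (count (add_mset y A) x) * f x) =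
        (\<Sum>x\<in>S. of_nat (count A x) * f x) + (\<Sum>x\<in>S. if y = x then f x else 0)" .
  have "(\<Sum>x\<in>S. if y = x then f x else 0) = f y" using sum.delta'[OF assms(1), of y f] yS by simp
  then show ?case using add eq by (simp add: add.commute)
qed

lemma size_le_card_set_mset:
  assumes "\<And>x. count A x \<le> 1" shows "size A \<le> card (set_mset A)"
  using assms
proof (induction A)
  case empty then show ?case by simp
next
  case (add y A)
  have "count (add_mset y A) y \<le> 1" using add.prems by blast
  then have "y \<notin># A" by (simp add: count_eq_zero_iff[symmetric])
  moreover have "size A \<le> card (set_mset A)"
  proof (rule add.IH)
    fix x show "count A x \<le> 1" using add.prems[of x] by (auto split: if_splits)
  qed
  ultimately show ?case by simp
qed

lemma order_lin_prod:
  fixes A :: "'b::idom multiset"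
  shows "order \<alpha> (\<Prod>x\<in>#A. [:-x, 1:]) = count A \<alpha>"
proof (induction A)
  case empty then show ?case by simp
next
  case (add y A)
  have nz: "(\<Prod>x\<in>#A. [:-x, 1:]) \<noteq> 0" by (force simp: prod_mset_zero_iff)
  have "order \<alpha> ([:-y, 1:] * (\<Prod>x\<in>#A. [:-x, 1:])) = order \<alpha> [:-y, 1:] + order \<alpha> (\<Prod>x\<in>#A. [:-x, 1:])"
    using nz by (intro order_mult) (subst mult_eq_0_iff, simp)
  moreover have "order \<alpha> [:-y, 1:] = (if \<alpha> = y then 1 else 0)"
  proof (cases "\<alpha> = y")
    case True then show ?thesis using order_power_n_n[of y 1] by simp
  next
    case False
    have "poly [:-y, 1:] \<alpha> \<noteq> 0" using False by simp
    then have "order \<alpha> [:-y, 1:] = 0" by (rule order_0I)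
    then show ?thesis using False by simp
  qed
  ultimately show ?case using add by simp
qed

lemma roots_lin_prod:
  fixes A :: "'b::idom multiset"
  shows "poly (\<Prod>x\<in>#A. [:-x, 1:]) \<alpha> = 0 \<longleftrightarrow> \<alpha> \<in># A"
  by (induction A) auto

lemma logder_lin_prod:
  fixes A :: "'b::field multiset"
  assumes "\<alpha> \<notin># A"
  shows "poly (pderiv (\<Prod>x\<in>#A. [:-x, 1:])) \<alpha> / poly (\<Prod>x\<in>#A. [:-x, 1:]) \<alpha> = (\<Sum>x\<in>#A. 1 / (\<alpha> - x))"
  using assms
proof (induction A)
  case empty then show ?case by (simp add: pderiv_pCons)
next
  case (add y A)
  define P where "P = (\<Prod>x\<in>#A. [:-x, 1:])"
  have Pa: "poly P \<alpha> \<noteq> 0" using add.prems roots_lin_prod[of A \<alpha>] by (simp add: P_def)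
  have ya: "\<alpha> - y \<noteq> 0" using add.prems by auto
  have d1: "pderiv [:-y, 1:] = 1" by (simp add: pderiv_pCons)
  have "pderiv ([:-y, 1:] * P) = [:-y, 1:] * pderiv P + P"
    by (simp only: pderiv_mult d1 mult_1_right)
  then have pv: "poly (pderiv ([:-y, 1:] * P)) \<alpha> = (\<alpha> - y) * poly (pderiv P) \<alpha> + poly P \<alpha>"
    by (simp only: poly_add poly_mult) (simp add: algebra_simps)
  have pv2: "poly ([:-y, 1:] * P) \<alpha> = (\<alpha> - y) * poly P \<alpha>"
    by (simp only: poly_mult) (simp add: algebra_simps)
  have "poly (pderiv ([:-y, 1:] * P)) \<alpha> / poly ([:-y, 1:] * P) \<alpha> =
             ((\<alpha> - y) * poly (pderiv P) \<alpha> + poly P \<alpha>) / ((\<alpha> - y) * poly P \<alpha>)"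
    by (simp only: pv pv2)
  also have "\<dots> = poly (pderiv P) \<alpha> / poly P \<alpha> + 1 / (\<alpha> - y)"
    using Pa ya by (simp add: field_simps)
  finally show ?case using add by (simp add: P_def add.commute)
qed

section \<open>The root sum equals the algebraic expression T\<close>

context gfix
begin

abbreviation G :: "'a alg_closure poly" where "G \<equiv> map_poly to_ac g"

definition B :: "'a alg_closure set" where "B = {\<beta>. poly G \<beta> = 0}"

lemma G_nz: "G \<noteq> 0" using g_nz by simp
lemma degree_G: "degree G = degree g" by simp
lemma lc_G: "lead_coeff G = 1" using g_monic by simp

lemma finite_B: "finite B" unfolding B_def by (rule poly_roots_finite[OF G_nz])

lemma coprime_no_common_root:
  assumes "coprime c g" "poly (map_poly to_ac g) \<beta> = 0"
  shows "poly (map_poly to_ac c) \<beta> \<noteq> 0"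
proof
  assume c0: "poly (map_poly to_ac c) \<beta> = 0"
  obtain s t where "s * c + t * g = 1" using bezout_poly[OF assms(1)] by blast
  then have "map_poly to_ac (s * c + t * g) = 1" by simp
  then have "poly (map_poly to_ac s) \<beta> * poly (map_poly to_ac c) \<beta> +
             poly (map_poly to_ac t) \<beta> * poly (map_poly to_ac g) \<beta> = 1"
    by (metis poly_1 poly_add poly_mult to_ac_phom.hom_add to_ac_phom.hom_mult)
  then show False using c0 assms(2) by simp
qed

lemma sep_G: "\<beta> \<in> B \<Longrightarrow> poly (pderiv G) \<beta> \<noteq> 0"
proof -
  assume "\<beta> \<in> B"
  then have b: "poly G \<beta> = 0" by (simp add: B_def)
  have "coprime (pderiv g) g" using g_sep by (simp add: coprime_commute)
  from coprime_no_common_root[OF this b] show ?thesis by (simp add: to_ac_hom.map_poly_pderiv)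
qed

lemma card_B: "card B \<ge> degree g"
proof -
  obtain A where A: "size A = degree G" "G = smult (lead_coeff G) (\<Prod>x\<in>#A. [:-x, 1:])"
    using alg_closed_imp_factorization[OF G_nz] by blast
  have GA: "G = (\<Prod>x\<in>#A. [:-x, 1:])" using A(2) lc_G g_monic by simp
  have BA: "B = set_mset A" unfolding B_def by (subst GA) (auto simp: roots_lin_prod)
  have "count A x \<le> 1" for x
  proof (rule ccontr)
    assume "\<not> count A x \<le> 1"
    then have "[:-x, 1:] ^ 2 dvd G" using order_divides[of x 2 G] GA order_lin_prod[of x A] by simp
    then obtain K where K: "G = [:-x, 1:] ^ 2 * K" by (rule dvdE)
    have Lx: "poly [:-x, 1:] x = 0" by simp
    have "pderiv G = [:-x, 1:] * [:-x, 1:] * pderiv K +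
        K * ([:-x, 1:] * pderiv [:-x, 1:] + [:-x, 1:] * pderiv [:-x, 1:])"
      by (subst K) (simp only: pderiv_mult power2_eq_square)
    then have "poly (pderiv G) x = 0"
      by (simp only: poly_add poly_mult Lx mult_zero_left mult_zero_right add_0)
    moreover have "x \<in> B" unfolding B_def using K by simp
    ultimately show False using sep_G by blast
  qed
  then have "size A \<le> card (set_mset A)" by (rule size_le_card_set_mset)
  then show ?thesis using A(1) BA by simp
qed

definition Qb :: "'a alg_closure \<Rightarrow> 'a alg_closure poly" where "Qb \<beta> = G div [:-\<beta>, 1:]"

lemma Qb_mult: "\<beta> \<in> B \<Longrightarrow> [:-\<beta>, 1:] * Qb \<beta> = G"
proof -
  assume "\<beta> \<in> B"
  then have "[:-\<beta>, 1:] dvd G" by (simp add: B_def poly_eq_0_iff_dvd)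
  then show ?thesis unfolding Qb_def by (rule dvd_mult_div_cancel)
qed

lemma Qb_nz: "\<beta> \<in> B \<Longrightarrow> Qb \<beta> \<noteq> 0" using Qb_mult[of \<beta>] G_nz by auto

lemma degree_Qb: "\<beta> \<in> B \<Longrightarrow> degree (Qb \<beta>) = degree g - 1"
proof -
  assume b: "\<beta> \<in> B"
  have "degree G = degree [:-\<beta>, 1:] + degree (Qb \<beta>)"
    using Qb_mult[OF b] Qb_nz[OF b] by (metis degree_mult_eq pCons_eq_0_iff zero_neq_one)
  then show ?thesis by simp
qed

lemma lc_Qb: "\<beta> \<in> B \<Longrightarrow> lead_coeff (Qb \<beta>) = 1"
proof -
  assume b: "\<beta> \<in> B"
  have "lead_coeff G = lead_coeff [:-\<beta>, 1:] * lead_coeff (Qb \<beta>)"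
    using Qb_mult[OF b] by (metis lead_coeff_mult)
  then show ?thesis using lc_G by simp
qed

lemma poly_Qb_other: "\<beta> \<in> B \<Longrightarrow> \<gamma> \<in> B \<Longrightarrow> \<gamma> \<noteq> \<beta> \<Longrightarrow> poly (Qb \<beta>) \<gamma> = 0"
proof -
  assume b: "\<beta> \<in> B" and c: "\<gamma> \<in> B" and ne: "\<gamma> \<noteq> \<beta>"
  have "0 = poly G \<gamma>" using c by (simp add: B_def)
  also have "\<dots> = (\<gamma> - \<beta>) * poly (Qb \<beta>) \<gamma>" by (subst Qb_mult[OF b, symmetric]) (simp add: algebra_simps)
  finally show ?thesis using ne by simp
qed

lemma poly_Qb_self: "\<beta> \<in> B \<Longrightarrow> poly (Qb \<beta>) \<beta> = poly (pderiv G) \<beta>"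
proof -
  assume b: "\<beta> \<in> B"
  have d1: "pderiv [:-\<beta>, 1:] = 1" by (simp add: pderiv_pCons)
  have "pderiv G = [:-\<beta>, 1:] * pderiv (Qb \<beta>) + Qb \<beta>"
    by (subst Qb_mult[OF b, symmetric]) (simp only: pderiv_mult d1 mult_1_right)
  then show ?thesis by simp
qed

lemma poly_Qb_eval: "\<beta> \<in> B \<Longrightarrow> \<alpha> \<noteq> \<beta> \<Longrightarrow> poly (Qb \<beta>) \<alpha> = poly G \<alpha> / (\<alpha> - \<beta>)"
proof -
  assume b: "\<beta> \<in> B" and ne: "\<alpha> \<noteq> \<beta>"
  have "poly G \<alpha> = (\<alpha> - \<beta>) * poly (Qb \<beta>) \<alpha>" by (subst Qb_mult[OF b, symmetric]) (simp add: algebra_simps)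
  then show ?thesis using ne by (simp add: field_simps)
qed

lemma lagrange:
  assumes "degree W < degree g"
  shows "W = (\<Sum>\<beta>\<in>B. smult (poly W \<beta> / poly (pderiv G) \<beta>) (Qb \<beta>))"
proof (rule ccontr)
  define R where "R = (\<Sum>\<beta>\<in>B. smult (poly W \<beta> / poly (pderiv G) \<beta>) (Qb \<beta>))"
  assume "W \<noteq> (\<Sum>\<beta>\<in>B. smult (poly W \<beta> / poly (pderiv G) \<beta>) (Qb \<beta>))"
  then have nz: "W - R \<noteq> 0" unfolding R_def by simp
  have dR: "degree R < degree g" unfolding R_def
  proof (rule degree_sum_less)
    show "0 < degree g" using g_deg by simp
    fix \<beta> assume "\<beta> \<in> B"
    then show "degree (smult (poly W \<beta> / poly (pderiv G) \<beta>) (Qb \<beta>)) < degree g"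
      using degree_Qb[of \<beta>] g_deg degree_smult_le[of _ "Qb \<beta>"] by fastforce
  qed
  have dWR: "degree (W - R) < degree g" using assms dR by (rule degree_diff_less)
  have "poly R \<gamma> = poly W \<gamma>" if c: "\<gamma> \<in> B" for \<gamma>
  proof -
    have "poly R \<gamma> = (\<Sum>\<beta>\<in>B. poly W \<beta> / poly (pderiv G) \<beta> * poly (Qb \<beta>) \<gamma>)"
      by (simp add: R_def poly_sum)
    also have "\<dots> = (\<Sum>\<beta>\<in>B. if \<beta> = \<gamma> then poly W \<beta> / poly (pderiv G) \<beta> * poly (Qb \<beta>) \<gamma> else 0)"
      using c poly_Qb_other by (intro sum.cong) auto
    also have "\<dots> = poly W \<gamma> / poly (pderiv G) \<gamma> * poly (Qb \<gamma>) \<gamma>"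
      using c finite_B by (simp add: sum.delta')
    also have "\<dots> = poly W \<gamma>" using c poly_Qb_self sep_G by simp
    finally show ?thesis .
  qed
  then have "B \<subseteq> {x. poly (W - R) x = 0}" by auto
  then have "card B \<le> card {x. poly (W - R) x = 0}"
    by (intro card_mono poly_roots_finite nz)
  also have "\<dots> \<le> degree (W - R)" by (rule card_poly_roots_bound[OF nz])
  finally show False using card_B dWR by simp
qed

lemma coeff_lagrange:
  assumes "degree W < degree g"
  shows "coeff W (degree g - 1) = (\<Sum>\<beta>\<in>B. poly W \<beta> / poly (pderiv G) \<beta>)"
proof -
  have "coeff W (degree g - 1) = (\<Sum>\<beta>\<in>B. poly W \<beta> / poly (pderiv G) \<beta> * coeff (Qb \<beta>) (degree g - 1))"
    by (subst lagrange[OF assms]) (simp add: coeff_sum)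
  also have "\<dots> = (\<Sum>\<beta>\<in>B. poly W \<beta> / poly (pderiv G) \<beta>)"
  proof (rule sum.cong)
    fix \<beta> assume b: "\<beta> \<in> B"
    have "coeff (Qb \<beta>) (degree g - 1) = 1" using lc_Qb[OF b] degree_Qb[OF b] by simp
    then show "poly W \<beta> / poly (pderiv G) \<beta> * coeff (Qb \<beta>) (degree g - 1) = poly W \<beta> / poly (pderiv G) \<beta>"
      by simp
  qed simp
  finally show ?thesis .
qed

lemma eval_lagrange:
  assumes "degree W < degree g" "poly G \<alpha> \<noteq> 0"
  shows "poly W \<alpha> / poly G \<alpha> = (\<Sum>\<beta>\<in>B. (poly W \<beta> / poly (pderiv G) \<beta>) / (\<alpha> - \<beta>))"
proof -
  have ne: "\<alpha> \<noteq> \<beta>" if "\<beta> \<in> B" for \<beta> using that assms(2) by (auto simp: B_def)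
  have "poly W \<alpha> = (\<Sum>\<beta>\<in>B. poly W \<beta> / poly (pderiv G) \<beta> * poly (Qb \<beta>) \<alpha>)"
    by (subst lagrange[OF assms(1)]) (simp add: poly_sum)
  also have "\<dots> = (\<Sum>\<beta>\<in>B. poly W \<beta> / poly (pderiv G) \<beta> * (poly G \<alpha> / (\<alpha> - \<beta>)))"
    using ne poly_Qb_eval by (intro sum.cong) auto
  also have "\<dots> = poly G \<alpha> * (\<Sum>\<beta>\<in>B. (poly W \<beta> / poly (pderiv G) \<beta>) / (\<alpha> - \<beta>))"
    by (simp add: sum_distrib_left algebra_simps)
  finally show ?thesis using assms(2) by simp
qed


lemma sum_mset_uminus': "(\<Sum>x\<in>#A. - f x) = - (\<Sum>x\<in>#A. (f x :: 'c::ab_group_add))"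
  by (induction A) simp_all

lemma sum_mset_mult_left': "(\<Sum>x\<in>#A. c * f x) = c * (\<Sum>x\<in>#A. (f x :: 'c::comm_ring_1))"
  by (induction A) (simp_all add: algebra_simps)

lemma root_sum_T:
  assumes dh: "degree h < degree g" and cop: "coprime c g"
  shows "root_sum h g c = T h c"
proof -
  define H where "H = map_poly to_ac h"
  define C where "C = map_poly to_ac c"
  have c0: "c \<noteq> 0" using cop g_not_unit by auto
  then have C0: "C \<noteq> 0" by (simp add: C_def)
  obtain A where A: "C = smult (lead_coeff C) (\<Prod>x\<in>#A. [:-x, 1:])"
    using alg_closed_imp_factorization[OF C0] by blast
  define P where "P = (\<Prod>x\<in>#A. [:-x, 1:])"
  have lc0: "lead_coeff C \<noteq> 0" using C0 by simp
  have roots: "{\<alpha>. poly C \<alpha> = 0} = set_mset A"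
    by (subst A) (auto simp: roots_lin_prod lc0 C0)
  have ord: "order \<alpha> C = count A \<alpha>" for \<alpha>
    by (subst A) (simp add: order_smult[OF lc0] order_lin_prod)
  have GA: "poly G \<alpha> \<noteq> 0" if "\<alpha> \<in># A" for \<alpha>
  proof
    assume "poly G \<alpha> = 0"
    from coprime_no_common_root[OF cop this] have "poly C \<alpha> \<noteq> 0" by (simp add: C_def)
    then show False using roots that by auto
  qed
  have CB: "poly C \<beta> \<noteq> 0" if "\<beta> \<in> B" for \<beta>
    using coprime_no_common_root[OF cop] that by (simp add: B_def C_def)
  define r where "r \<beta> = poly H \<beta> / poly (pderiv G) \<beta>" for \<beta>
  have dH: "degree H < degree g" using dh by (simp add: H_def)
  define S where "S = (\<Sum>\<alpha>\<in>{\<alpha>. poly C \<alpha> = 0}. of_nat (order \<alpha> C) * (poly H \<alpha> / poly G \<alpha>))"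
  have rs: "root_sum h g c = of_ac S"
    unfolding root_sum_def S_def H_def C_def by simp
  have "S = (\<Sum>\<alpha>\<in>set_mset A. of_nat (count A \<alpha>) * (poly H \<alpha> / poly G \<alpha>))"
    unfolding S_def roots ord ..
  also have "\<dots> = (\<Sum>\<alpha>\<in>#A. poly H \<alpha> / poly G \<alpha>)" by (rule sum_count_mset) auto
  also have "\<dots> = (\<Sum>\<alpha>\<in>#A. \<Sum>\<beta>\<in>B. r \<beta> / (\<alpha> - \<beta>))"
    using eval_lagrange[OF dH] GA unfolding r_def by (intro arg_cong[where f=sum_mset] image_mset_cong) auto
  also have "\<dots> = (\<Sum>\<alpha>\<in>set_mset A. of_nat (count A \<alpha>) * (\<Sum>\<beta>\<in>B. r \<beta> / (\<alpha> - \<beta>)))"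
    by (rule sum_count_mset[symmetric]) auto
  also have "\<dots> = (\<Sum>\<beta>\<in>B. \<Sum>\<alpha>\<in>set_mset A. of_nat (count A \<alpha>) * (r \<beta> / (\<alpha> - \<beta>)))"
    by (simp add: sum_distrib_left sum.swap[of _ B])
  also have "\<dots> = (\<Sum>\<beta>\<in>B. \<Sum>\<alpha>\<in>#A. r \<beta> / (\<alpha> - \<beta>))"
    by (intro sum.cong refl sum_count_mset) auto
  also have "\<dots> = (\<Sum>\<beta>\<in>B. - (poly H \<beta> * poly (pderiv C) \<beta> / (poly (pderiv G) \<beta> * poly C \<beta>)))"
  proof (rule sum.cong[OF refl])
    fix \<beta> assume b: "\<beta> \<in> B"
    have nA: "\<beta> \<notin># A" using CB[OF b] roots by auto
    have "poly (pderiv C) \<beta> / poly C \<beta> = poly (pderiv P) \<beta> / poly P \<beta>"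
      by (subst (1 2) A) (use lc0 in \<open>simp add: pderiv_smult P_def\<close>)
    also have "\<dots> = (\<Sum>x\<in>#A. 1 / (\<beta> - x))" unfolding P_def by (rule logder_lin_prod[OF nA])
    finally have ld: "poly (pderiv C) \<beta> / poly C \<beta> = (\<Sum>x\<in>#A. 1 / (\<beta> - x))" .
    have "(\<Sum>\<alpha>\<in>#A. r \<beta> / (\<alpha> - \<beta>)) = (\<Sum>\<alpha>\<in>#A. - (r \<beta> * (1 / (\<beta> - \<alpha>))))"
      by (intro arg_cong[where f=sum_mset] image_mset_cong) (simp add: minus_divide_right)
    also have "\<dots> = - (r \<beta> * (\<Sum>\<alpha>\<in>#A. 1 / (\<beta> - \<alpha>)))"
      by (simp only: sum_mset_uminus' sum_mset_mult_left')
    also have "\<dots> = - (poly H \<beta> * poly (pderiv C) \<beta> / (poly (pderiv G) \<beta> * poly C \<beta>))"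
      unfolding ld[symmetric] r_def by simp
    finally show "(\<Sum>\<alpha>\<in>#A. r \<beta> / (\<alpha> - \<beta>)) = - (poly H \<beta> * poly (pderiv C) \<beta> / (poly (pderiv G) \<beta> * poly C \<beta>))" .
  qed
  finally have S_eq: "S = - (\<Sum>\<beta>\<in>B. poly H \<beta> * poly (pderiv C) \<beta> / (poly (pderiv G) \<beta> * poly C \<beta>))"
    by (simp add: sum_negf)
  define w where "w = (h * pderiv c * cinv c) mod g"
  define W where "W = map_poly to_ac w"
  have Tw: "T h c = - coeff w (degree g - 1)" by (simp add: T_def lam_def w_def)
  have dw: "degree W < degree g" using V_mod by (simp add: W_def w_def V_def)
  obtain k where k: "c * cinv c = 1 + g * k"
  proof -
    have "g dvd c * cinv c - 1" using cinv[OF cop] by (simp add: cong_iff_dvd_diff)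
    then obtain k where "c * cinv c - 1 = g * k" by (rule dvdE)
    then show ?thesis using that[of k] by (simp add: algebra_simps)
  qed
  have Wb: "poly W \<beta> = poly H \<beta> * poly (pderiv C) \<beta> / poly C \<beta>" if b: "\<beta> \<in> B" for \<beta>
  proof -
    have Gb: "poly G \<beta> = 0" using b by (simp add: B_def)
    have "h * pderiv c * cinv c = (h * pderiv c * cinv c) div g * g + w"
      by (simp add: w_def div_mult_mod_eq)
    then have "poly (map_poly to_ac (h * pderiv c * cinv c)) \<beta> =
        poly (map_poly to_ac ((h * pderiv c * cinv c) div g)) \<beta> * poly G \<beta> + poly W \<beta>"
      by (metis W_def poly_add poly_mult to_ac_phom.hom_add to_ac_phom.hom_mult)
    then have 1: "poly W \<beta> = poly H \<beta> * poly (pderiv C) \<beta> * poly (map_poly to_ac (cinv c)) \<beta>"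
      using Gb by (simp add: H_def C_def to_ac_hom.map_poly_pderiv to_ac_phom.hom_mult)
    have "poly (map_poly to_ac (c * cinv c)) \<beta> = poly (map_poly to_ac (1 + g * k)) \<beta>" by (simp only: k)
    then have "poly C \<beta> * poly (map_poly to_ac (cinv c)) \<beta> = 1" using Gb by (simp add: C_def to_ac_phom.hom_mult to_ac_phom.hom_add)
    then have "poly (map_poly to_ac (cinv c)) \<beta> = 1 / poly C \<beta>" using CB[OF b] by (simp add: field_simps)
    then show ?thesis using 1 by simp
  qed
  have "to_ac (T h c) = - coeff W (degree g - 1)" by (simp add: Tw W_def)
  also have "coeff W (degree g - 1) = (\<Sum>\<beta>\<in>B. poly W \<beta> / poly (pderiv G) \<beta>)" by (rule coeff_lagrange[OF dw])
  also have "\<dots> = (\<Sum>\<beta>\<in>B. poly H \<beta> * poly (pderiv C) \<beta> / (poly (pderiv G) \<beta> * poly C \<beta>))"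
    using Wb by (intro sum.cong) (auto simp: field_simps)
  finally have "to_ac (T h c) = S" using S_eq by simp
  then show ?thesis using rs by (metis of_ac_to_ac)
qed

end




lemma dvd_diff_swap: "(x::'b::comm_ring_1) dvd a - b \<Longrightarrow> x dvd b - a"
  by (metis dvd_minus_iff minus_diff_eq)

context gfix
begin

lemma lam_surj:
  assumes "\<not> g dvd e" shows "\<exists>u\<in>V. lam (e * u) = x"
proof -
  obtain u0 where u0: "u0 \<in> V" "lam (e * u0) \<noteq> 0" using lam_nondeg[OF assms] by blast
  define t where "t = lam (e * u0)"
  define u where "u = smult (x / t) u0"
  have "u \<in> V" unfolding u_def by (rule V_smult[OF u0(1)])
  moreover have "lam (e * u) = x"
  proof -
    have "e * u = smult (x / t) (e * u0)" by (simp add: u_def mult_smult_right)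
    then have "lam (e * u) = x / t * t" by (simp add: lam_smult t_def)
    then show ?thesis using u0(2) t_def by simp
  qed
  ultimately show ?thesis by blast
qed

lemma mod_g2_cong: "[1 + g * u = 1 + g * (u mod g)] (mod g ^ 2)"
proof -
  have "1 + g * u - (1 + g * (u mod g)) = g * (u - u mod g)" by (simp add: algebra_simps)
  also have "\<dots> = g ^ 2 * (u div g)" by (simp add: minus_mod_eq_mult_div power2_eq_square)
  finally have eq: "1 + g * u - (1 + g * (u mod g)) = g ^ 2 * (u div g)" .
  show ?thesis unfolding cong_iff_dvd_diff by (subst eq) simp
qed

lemma one_plus_mult_cong: "[(1 + g * u) * (1 + g * v) = 1 + g * (u + v)] (mod g ^ 2)"
proof -
  have eq: "(1 + g * u) * (1 + g * v) - (1 + g * (u + v)) = g ^ 2 * (u * v)"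
    by (simp add: power2_eq_square algebra_simps)
  show ?thesis unfolding cong_iff_dvd_diff by (subst eq) simp
qed

end

locale gpsi = gfix g for g :: "'a::{field,finite} poly" +
  fixes \<psi> :: "'a \<Rightarrow> complex"
  assumes psi: "nontrivial_additive_char \<psi>"
begin

abbreviation "Ps \<equiv> Psi \<psi>"

definition E :: "'a poly \<Rightarrow> 'a poly \<Rightarrow> complex" where
  "E h c = (if coprime c g then Ps (T h c) else 0)"

lemma chi_E: "degree h < degree g \<Longrightarrow> chi_f \<psi> h g = E h"
  by (rule ext) (simp add: chi_f_def E_def Psi_def root_sum_T)

lemma E_mult: "coprime a g \<Longrightarrow> coprime b g \<Longrightarrow> E h (a * b) = E h a * E h b"
  by (simp add: E_def coprime_mult_l T_mult Psi_add[OF psi])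

lemma E_cong2:
  assumes "[a = b] (mod g ^ 2)" shows "E h a = E h b"
proof -
  have ab: "coprime a g \<longleftrightarrow> coprime b g" using coprime_cong_g[OF cong_g2_g[OF assms]] .
  show ?thesis
  proof (cases "coprime a g")
    case True then show ?thesis using ab T_cong2[OF True assms] by (simp add: E_def)
  next
    case False then show ?thesis using ab by (simp add: E_def)
  qed
qed

lemma E_one_plus: "E h (1 + g * u) = Ps (- lam (h * pderiv g * u))"
  using coprime_one_plus[of u] by (simp add: E_def T_one_plus)

lemma E_const: "a \<noteq> 0 \<Longrightarrow> E h [:a:] = 1"
proof -
  assume a: "a \<noteq> 0"
  have "is_unit [:a:]" using a by (simp add: is_unit_pCons_iff)
  then have "coprime [:a:] g" by (rule is_unit_left_imp_coprime)
  then show ?thesis by (simp add: E_def T_const Psi_0[OF psi])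
qed

lemma E_one: "E h 1 = 1"
  using E_const[of 1 h] by (simp add: one_pCons)

lemma E_nz: "coprime a g \<Longrightarrow> E h a \<noteq> 0"
  by (simp add: E_def Psi_nz[OF psi])

lemma E_pow_p: "coprime a g \<Longrightarrow> E h a ^ CHAR('a) = 1"
  by (simp add: E_def Psi_pow_p[OF psi])

lemma Ps_nontriv_lam:
  assumes "\<not> g dvd e" shows "\<exists>u\<in>V. Ps (- lam (e * u)) \<noteq> 1"
proof -
  obtain a where a: "Ps a \<noteq> 1" using Psi_nontriv[OF psi] by blast
  obtain u where u: "u \<in> V" "lam (e * u) = - a" using lam_surj[OF assms] by blast
  then have "Ps (- lam (e * u)) \<noteq> 1" using a by simp
  then show ?thesis using u(1) by blast
qed

lemma E_dirichlet:
  shows "dirichlet_char (g ^ 2) (E h)"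
  unfolding dirichlet_char_def
proof (intro conjI allI impI)
  fix a b :: "'a poly" assume "a mod g ^ 2 = b mod g ^ 2"
  then show "E h a = E h b" by (intro E_cong2) (simp add: cong_def)
next
  fix a :: "'a poly" assume "\<not> coprime a (g ^ 2)"
  then show "E h a = 0" by (simp add: E_def coprime_g2)
next
  fix a b :: "'a poly" assume "coprime a (g ^ 2)" "coprime b (g ^ 2)"
  then show "E h (a * b) = E h a * E h b" by (simp add: coprime_g2 E_mult)
next
  show "E h 1 = 1" by (rule E_one)
qed

lemma E_primitive:
  assumes hcop: "coprime h g"
  shows "primitive_dirichlet_char (g ^ 2) (E h)"
  unfolding primitive_dirichlet_char_def
proof (intro conjI E_dirichlet notI)
  assume "\<exists>M1. lead_coeff M1 = 1 \<and> M1 dvd g ^ 2 \<and> M1 \<noteq> g ^ 2 \<and>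
      (\<forall>a b. coprime a (g ^ 2) \<longrightarrow> coprime b (g ^ 2) \<longrightarrow> a mod M1 = b mod M1 \<longrightarrow> E h a = E h b)"
  then obtain M1 where M1: "lead_coeff M1 = 1" "M1 dvd g ^ 2" "M1 \<noteq> g ^ 2"
    and dep: "\<And>a b. coprime a (g ^ 2) \<Longrightarrow> coprime b (g ^ 2) \<Longrightarrow> a mod M1 = b mod M1 \<Longrightarrow> E h a = E h b"
    by blast
  obtain D where D: "g ^ 2 = M1 * D" using M1(2) by (rule dvdE)
  have g2nz: "g ^ 2 \<noteq> 0" using g_nz by simp
  then have D0: "D \<noteq> 0" "M1 \<noteq> 0" using D by auto
  have "degree D > 0"
  proof (rule ccontr)
    assume "\<not> degree D > 0"
    then have dD: "degree D = 0" by simp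
    have "lead_coeff (g ^ 2) = lead_coeff M1 * lead_coeff D" using D by (simp add: lead_coeff_mult)
    then have "lead_coeff D = 1" using M1(1) g_monic by (simp add: lead_coeff_power)
    moreover have "D = [:coeff D 0:]" using degree_0_id[OF dD] by simp
    ultimately have "D = [:1:]" using dD by simp
    then have "D = 1" by (simp add: one_pCons)
    then show False using D M1(3) by simp
  qed
  then obtain P R where P: "irreducible P" "D = P * R" "monic P" using irreducible_monic_factor by blast
  have P0: "P \<noteq> 0" using irr_degree[OF P(1)] by simp
  have "P dvd D" using P(2) by simp
  moreover have "D dvd g ^ 2" using D by simp
  ultimately have "P dvd g ^ 2" by (rule dvd_trans)
  then have "P dvd g * g" by (simp add: power2_eq_square)
  then have "P dvd g" using irr_dvd_mult[OF P(1)] by blast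
  then obtain g1 where g1: "g = P * g1" by (rule dvdE)
  have g10: "g1 \<noteq> 0" using g_nz g1 by auto
  have "P * (M1 * R) = M1 * D" using P(2) by (simp add: algebra_simps)
  also have "\<dots> = g ^ 2" using D by simp
  also have "\<dots> = P * (P * g1 ^ 2)" using g1 by (simp add: power2_eq_square algebra_simps)
  finally have "P * (M1 * R) = P * (P * g1 ^ 2)" .
  then have "M1 * R = P * g1 ^ 2" using P0 by simp
  then have M1d: "M1 dvd P * g1 ^ 2" unfolding dvd_def by (intro exI[of _ R]) simp
  have nd: "\<not> g dvd h * pderiv g * g1"
  proof
    assume "g dvd h * pderiv g * g1"
    then have "g dvd h * (pderiv g * g1)" by (simp add: mult.assoc)
    moreover have "coprime g h" using hcop by (simp add: coprime_commute)
    ultimately have "g dvd pderiv g * g1" using coprime_dvd_cancel by blast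
    then have "P * g1 dvd pderiv g * g1" using g1 by simp
    then have "P dvd pderiv g" using g10 by (simp add: dvd_times_right_cancel_iff)
    then have "\<not> coprime g (pderiv g)"
      using \<open>P dvd g\<close> P(1) unfolding coprime_def irreducible_def by blast
    then show False using g_sep by simp
  qed
  obtain u where u: "u \<in> V" "Ps (- lam (h * pderiv g * g1 * u)) \<noteq> 1"
    using Ps_nontriv_lam[OF nd] by blast
  define c where "c = 1 + g * (g1 * u)"
  have "E h c = Ps (- lam (h * pderiv g * (g1 * u)))" unfolding c_def by (rule E_one_plus)
  then have Ec: "E h c \<noteq> 1" using u(2) by (simp add: mult.assoc)
  have "c mod M1 = 1 mod M1"
  proof -
    have "g * (g1 * u) = (P * g1 ^ 2) * u" using g1 by (simp add: power2_eq_square algebra_simps)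
    moreover have "M1 dvd (P * g1 ^ 2) * u" using M1d by (rule dvd_mult2)
    ultimately have "M1 dvd g * (g1 * u)" by (simp only:)
    then show ?thesis unfolding c_def by (simp add: mod_eq_dvd_iff)
  qed
  moreover have "coprime c (g ^ 2)" unfolding c_def by (simp add: coprime_g2 coprime_one_plus)
  moreover have "coprime 1 (g ^ 2)" by simp
  ultimately have "E h c = E h 1" using dep by blast
  then show False using Ec E_one by simp
qed

lemma E_inj:
  assumes "degree h1 < degree g" "degree h2 < degree g" "E h1 = E h2"
  shows "h1 = h2"
proof -
  have "g dvd (h1 - h2) * pderiv g"
  proof (rule ccontr)
    assume "\<not> g dvd (h1 - h2) * pderiv g"
    then obtain u where u: "Ps (- lam ((h1 - h2) * pderiv g * u)) \<noteq> 1"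
      using Ps_nontriv_lam by blast
    have "E h1 (1 + g * u) = E h2 (1 + g * u)" using assms(3) by simp
    then have eq: "Ps (- lam (h1 * pderiv g * u)) = Ps (- lam (h2 * pderiv g * u))" by (simp add: E_one_plus)
    have "(h1 - h2) * pderiv g * u = h1 * pderiv g * u - h2 * pderiv g * u" by (simp add: algebra_simps)
    then have "lam ((h1 - h2) * pderiv g * u) = lam (h1 * pderiv g * u) - lam (h2 * pderiv g * u)"
      by (simp add: lam_diff)
    then have eq1: "- lam (h1 * pderiv g * u) = - lam ((h1 - h2) * pderiv g * u) + - lam (h2 * pderiv g * u)"
      by simp
    have "Ps (- lam (h1 * pderiv g * u)) = Ps (- lam ((h1 - h2) * pderiv g * u) + - lam (h2 * pderiv g * u))"
      by (subst eq1) (rule refl)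
    also have "\<dots> = Ps (- lam ((h1 - h2) * pderiv g * u)) * Ps (- lam (h2 * pderiv g * u))"
      by (rule Psi_add[OF psi])
    finally have "Ps (- lam (h1 * pderiv g * u)) = Ps (- lam ((h1 - h2) * pderiv g * u)) * Ps (- lam (h2 * pderiv g * u))" .
    then show False using eq u Psi_nz[OF psi] by simp
  qed
  then have "g dvd pderiv g * (h1 - h2)" by (simp add: mult.commute)
  then have "g dvd h1 - h2" using coprime_dvd_cancel[OF g_sep] by blast
  moreover have "h1 - h2 \<in> V" using assms(1,2) by (simp add: V_def degree_diff_less)
  ultimately show ?thesis using V_dvd by fastforce
qed


lemma E_pow: "coprime b g \<Longrightarrow> E h (b ^ n) = E h b ^ n"
proof (induction n)
  case 0 then show ?case by (simp add: E_one)
next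
  case (Suc n)
  have "E h (b ^ Suc n) = E h (b * b ^ n)" by simp
  also have "\<dots> = E h b * E h (b ^ n)" using Suc.prems coprime_pow_l[OF Suc.prems] by (rule E_mult)
  finally show ?case using Suc by simp
qed

lemma T_cong_M1:
  assumes P: "g = P * g1" "h = P * h1" and ab: "(P * g1 ^ 2) dvd (b - a)"
    and ca: "coprime a g"
  shows "T h a = T h b"
proof -
  obtain k where k: "b - a = (P * g1 ^ 2) * k" using ab by (rule dvdE)
  have gM: "g dvd P * g1 ^ 2" using P by (simp add: power2_eq_square)
  have "g dvd b - a" using gM ab by (rule dvd_trans)
  then have "g dvd a - b" by (metis dvd_minus_iff minus_diff_eq)
  then have cab: "[a = b] (mod g)" by (simp add: cong_iff_dvd_diff)
  have "pderiv b - pderiv a = pderiv (b - a)" by (simp add: pderiv_diff)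
  also have "\<dots> = pderiv ((P * g1 ^ 2) * k)" by (simp only: k)
  also have "\<dots> = P * (g1 * (g1 * pderiv k + k * pderiv g1) + g1 * k * pderiv g1) + g1 * g1 * k * pderiv P"
    by (simp add: pderiv_mult power2_eq_square algebra_simps)
  finally have "h * (pderiv b - pderiv a) =
      g * (h1 * P * (g1 * pderiv k + k * pderiv g1 + k * pderiv g1) + h1 * g1 * k * pderiv P)"
    using P by (simp add: algebra_simps)
  then have "g dvd h * (pderiv b - pderiv a)" by simp
  then have "g dvd h * pderiv b - h * pderiv a" by (simp add: right_diff_distrib)
  then have "g dvd h * pderiv a - h * pderiv b" by (rule dvd_diff_swap)
  then have "[h * pderiv a = h * pderiv b] (mod g)" by (simp add: cong_iff_dvd_diff)
  then have "[h * pderiv a * cinv a = h * pderiv b * cinv b] (mod g)"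
    using cinv_cong[OF ca cab] by (rule cong_mult)
  then show ?thesis unfolding T_def by (simp add: lam_cong)
qed

lemma E_surj:
  assumes prim: "primitive_dirichlet_char (g ^ 2) \<chi>"
    and pw: "\<forall>a. coprime a (g ^ 2) \<longrightarrow> \<chi> a ^ CHAR('a) = 1"
  shows "\<exists>h. coprime h g \<and> degree h < degree g \<and> E h = \<chi>"
proof -
  have dc: "dirichlet_char (g ^ 2) \<chi>" using prim by (simp add: primitive_dirichlet_char_def)
  have noM: "\<not> (\<exists>M1. lead_coeff M1 = 1 \<and> M1 dvd g ^ 2 \<and> M1 \<noteq> g ^ 2 \<and>
          (\<forall>a b. coprime a (g ^ 2) \<longrightarrow> coprime b (g ^ 2) \<longrightarrow> a mod M1 = b mod M1 \<longrightarrow> \<chi> a = \<chi> b))"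
    using prim by (simp add: primitive_dirichlet_char_def)
  have dc1: "\<forall>a b. a mod g ^ 2 = b mod g ^ 2 \<longrightarrow> \<chi> a = \<chi> b"
    using dc unfolding dirichlet_char_def by blast
  have dc2: "\<forall>a. \<not> coprime a (g ^ 2) \<longrightarrow> \<chi> a = 0"
    using dc unfolding dirichlet_char_def by blast
  have dc3: "\<forall>a b. coprime a (g ^ 2) \<longrightarrow> coprime b (g ^ 2) \<longrightarrow> \<chi> (a * b) = \<chi> a * \<chi> b"
    using dc unfolding dirichlet_char_def by blast
  have \<chi>1: "\<chi> 1 = 1" using dc unfolding dirichlet_char_def by blast
  have \<chi>cong: "\<chi> a = \<chi> b" if "[a = b] (mod g ^ 2)" for a b
    using dc1 that unfolding cong_def by blast
  have \<chi>0: "\<chi> a = 0" if "\<not> coprime a g" for a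
    using dc2 that coprime_g2 by blast
  have \<chi>mult: "\<chi> (a * b) = \<chi> a * \<chi> b" if "coprime a g" "coprime b g" for a b
    using dc3 that coprime_g2 by blast
  have \<chi>pow: "\<chi> (b ^ n) = \<chi> b ^ n" if "coprime b g" for b n
  proof (induction n)
    case 0 then show ?case by (simp add: \<chi>1)
  next
    case (Suc n)
    have "\<chi> (b ^ Suc n) = \<chi> (b * b ^ n)" by simp
    also have "\<dots> = \<chi> b * \<chi> (b ^ n)" using that coprime_pow_l[OF that] by (rule \<chi>mult)
    finally show ?case using Suc by simp
  qed
  define \<phi> where "\<phi> u = \<chi> (1 + g * u)" for u
  have \<phi>_add: "\<phi> (u + v) = \<phi> u * \<phi> v" for u v
  proof -
    have "\<phi> (u + v) = \<chi> ((1 + g * u) * (1 + g * v))"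
      unfolding \<phi>_def by (rule \<chi>cong) (rule cong_sym[OF one_plus_mult_cong])
    also have "\<dots> = \<phi> u * \<phi> v" unfolding \<phi>_def by (rule \<chi>mult) (rule coprime_one_plus)+
    finally show ?thesis .
  qed
  have \<phi>0: "\<phi> 0 = 1" by (simp add: \<phi>_def \<chi>1)
  define K where "K e u = Ps (lam (e * u))" for e u
  have K_add_e: "K (e1 + e2) u = K e1 u * K e2 u" for e1 e2 u
    by (simp add: K_def distrib_right lam_add Psi_add[OF psi])
  have K_add_u: "K e (u + v) = K e u * K e v" for e u v
    by (simp add: K_def distrib_left lam_add Psi_add[OF psi])
  have inner: "(\<Sum>e\<in>V. K e u) = (if u = 0 then of_nat (card V) else 0)" if u: "u \<in> V" for u
  proof (cases "u = 0")
    case True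
    then show ?thesis by (simp add: K_def lam_0 Psi_0[OF psi])
  next
    case False
    have nd: "\<not> g dvd u" using V_dvd u False by blast
    obtain a where a: "Ps a \<noteq> 1" using Psi_nontriv[OF psi] by blast
    obtain e0 where e0: "e0 \<in> V" "lam (u * e0) = a" using lam_surj[OF nd] by blast
    have "K e0 u \<noteq> 1" using e0 a by (simp add: K_def mult.commute)
    then have "(\<Sum>e\<in>V. K e u) = 0"
      by (intro char_sum_zero[OF finite_V V_add V_uminus K_add_e e0(1)])
    then show ?thesis using False by simp
  qed
  have total: "(\<Sum>e\<in>V. \<Sum>u\<in>V. \<phi> u * K e u) = of_nat (card V)"
  proof -
    have "(\<Sum>e\<in>V. \<Sum>u\<in>V. \<phi> u * K e u) = (\<Sum>u\<in>V. \<Sum>e\<in>V. \<phi> u * K e u)"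
      by (rule sum.swap)
    also have "\<dots> = (\<Sum>u\<in>V. \<phi> u * (\<Sum>e\<in>V. K e u))"
      by (simp add: sum_distrib_left)
    also have "\<dots> = (\<Sum>u\<in>V. if u = 0 then of_nat (card V) else 0)"
      using inner \<phi>0 by (intro sum.cong) auto
    also have "\<dots> = of_nat (card V)" using V_0 finite_V by (simp add: sum.delta)
    finally show ?thesis .
  qed
  have cV: "card V \<noteq> 0" using V_0 finite_V by auto
  obtain e where e: "e \<in> V" "(\<Sum>u\<in>V. \<phi> u * K e u) \<noteq> 0"
  proof (rule ccontr)
    assume "\<not> thesis"
    then have "\<forall>e\<in>V. (\<Sum>u\<in>V. \<phi> u * K e u) = 0" using that by blast
    then have "(\<Sum>e\<in>V. \<Sum>u\<in>V. \<phi> u * K e u) = 0" by simp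
    then show False using total cV by simp
  qed
  have triv: "\<phi> u * K e u = 1" if u: "u \<in> V" for u
  proof (rule ccontr)
    assume ne: "\<phi> u * K e u \<noteq> 1"
    have hom: "\<phi> (u1 + u2) * K e (u1 + u2) = (\<phi> u1 * K e u1) * (\<phi> u2 * K e u2)" for u1 u2
      by (simp add: \<phi>_add K_add_u algebra_simps)
    have "(\<Sum>u\<in>V. \<phi> u * K e u) = 0"
      by (rule char_sum_zero[OF finite_V V_add V_uminus hom u ne])
    then show False using e(2) by simp
  qed
  have \<chi>V: "\<chi> (1 + g * u) = Ps (- lam (e * u))" if u: "u \<in> V" for u
  proof -
    have "\<phi> u * Ps (lam (e * u)) = 1" using triv[OF u] by (simp add: K_def)
    moreover have "Ps (- lam (e * u)) * Ps (lam (e * u)) = 1" by (rule Psi_uminus[OF psi])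
    ultimately have "\<phi> u * Ps (lam (e * u)) = Ps (- lam (e * u)) * Ps (lam (e * u))" by simp
    then show ?thesis using Psi_nz[OF psi, of "lam (e * u)"] by (simp add: \<phi>_def)
  qed
  have cg': "coprime (pderiv g) g" using g_sep by (simp add: coprime_commute)
  define h where "h = (e * cinv (pderiv g)) mod g"
  have dh: "degree h < degree g" using V_mod by (simp add: h_def V_def)
  have hg: "[h * pderiv g = e] (mod g)"
  proof -
    have "[h = e * cinv (pderiv g)] (mod g)" by (simp add: h_def cong_def)
    then have "[h * pderiv g = e * cinv (pderiv g) * pderiv g] (mod g)" by (rule cong_scalar_right)
    moreover have "e * cinv (pderiv g) * pderiv g = e * (pderiv g * cinv (pderiv g))" by (simp add: algebra_simps)
    ultimately have "[h * pderiv g = e * (pderiv g * cinv (pderiv g))] (mod g)" by simp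
    also have "[e * (pderiv g * cinv (pderiv g)) = e * 1] (mod g)"
      using cinv[OF cg'] by (rule cong_scalar_left)
    finally show ?thesis by simp
  qed
  have E1u: "E h (1 + g * u) = \<chi> (1 + g * u)" for u
  proof -
    have um: "u mod g \<in> V" by (rule V_mod)
    have "E h (1 + g * u) = E h (1 + g * (u mod g))" by (rule E_cong2[OF mod_g2_cong])
    also have "\<dots> = Ps (- lam (h * pderiv g * (u mod g)))" by (rule E_one_plus)
    also have "lam (h * pderiv g * (u mod g)) = lam (e * (u mod g))"
      using hg by (intro lam_cong cong_mult cong_refl)
    also have "Ps (- lam (e * (u mod g))) = \<chi> (1 + g * (u mod g))" using \<chi>V[OF um] by simp
    also have "\<dots> = \<chi> (1 + g * u)" by (rule \<chi>cong[OF cong_sym[OF mod_g2_cong]])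
    finally show ?thesis .
  qed
  have ratio: "\<chi> c2 * E h c1 = \<chi> c1 * E h c2" if c1: "coprime c1 g" and c12: "[c1 = c2] (mod g)" for c1 c2
  proof -
    have c2: "coprime c2 g" using coprime_cong_g[OF c12] c1 by simp
    have "g dvd c1 - c2" using c12 by (simp add: cong_iff_dvd_diff)
    then have "g dvd c2 - c1" by (rule dvd_diff_swap)
    then obtain m where m: "c2 - c1 = g * m" by (rule dvdE)
    have "g dvd c1 * cinv c1 - 1" using cinv[OF c1] by (simp add: cong_iff_dvd_diff)
    then obtain k where k: "c1 * cinv c1 - 1 = g * k" by (rule dvdE)
    define u where "u = m * cinv c1"
    have "c1 * (1 + g * u) - c2 = g * m * (c1 * cinv c1 - 1) - (c2 - c1 - g * m)"
      by (simp add: u_def algebra_simps)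
    also have "\<dots> = g ^ 2 * (m * k)" by (simp only: k m) (simp add: power2_eq_square algebra_simps)
    finally have eqn: "c1 * (1 + g * u) - c2 = g ^ 2 * (m * k)" .
    have "[c1 * (1 + g * u) = c2] (mod g ^ 2)"
      unfolding cong_iff_dvd_diff by (subst eqn) simp
    then have ce: "[c2 = c1 * (1 + g * u)] (mod g ^ 2)" by (rule cong_sym)
    have "\<chi> c2 = \<chi> c1 * \<chi> (1 + g * u)" using \<chi>cong[OF ce] \<chi>mult[OF c1 coprime_one_plus] by simp
    moreover have "E h c2 = E h c1 * E h (1 + g * u)" using E_cong2[OF ce] E_mult[OF c1 coprime_one_plus] by simp
    ultimately show ?thesis using E1u[of u] by simp
  qed
  have main: "\<chi> c = E h c" if c: "coprime c g" for c
  proof -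
    obtain b where b: "coprime b g" "[b ^ CHAR('a) = c] (mod g)" using frob_mod_g[OF c] by blast
    have bp: "coprime (b ^ CHAR('a)) g" by (rule coprime_pow_l[OF b(1)])
    have "\<chi> c * E h (b ^ CHAR('a)) = \<chi> (b ^ CHAR('a)) * E h c" by (rule ratio[OF bp b(2)])
    moreover have "E h (b ^ CHAR('a)) = 1" using E_pow[OF b(1)] E_pow_p[OF b(1)] by simp
    moreover have "\<chi> (b ^ CHAR('a)) = 1" using \<chi>pow[OF b(1)] pw b(1) by (simp add: coprime_g2)
    ultimately show ?thesis by simp
  qed
  have Eh: "E h = \<chi>"
  proof
    fix c show "E h c = \<chi> c"
    proof (cases "coprime c g")
      case True then show ?thesis using main by simp
    next
      case False then show ?thesis using \<chi>0 by (simp add: E_def)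
    qed
  qed
  have hcop: "coprime h g"
  proof (rule ccontr)
    assume "\<not> coprime h g"
    then obtain P where P: "irreducible P" "monic P" "P dvd h" "P dvd g"
      using irr_common_factor g_nz by blast
    obtain g1 where g1: "g = P * g1" using P(4) by (rule dvdE)
    obtain h1 where h1: "h = P * h1" using P(3) by (rule dvdE)
    define M1 where "M1 = P * g1 ^ 2"
    have P0: "P \<noteq> 0" using irr_degree[OF P(1)] by simp
    have lg1: "lead_coeff g1 = 1" using g_monic g1 P(2) by (simp add: lead_coeff_mult)
    have lM: "lead_coeff M1 = 1" using lg1 P(2) by (simp add: M1_def lead_coeff_mult lead_coeff_power)
    have gM: "g ^ 2 = M1 * P" using g1 by (simp add: M1_def power2_eq_square algebra_simps)
    have M0: "M1 \<noteq> 0" using gM g_nz by auto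
    have Md: "M1 dvd g ^ 2" using gM by simp
    have Mne: "M1 \<noteq> g ^ 2"
    proof
      assume "M1 = g ^ 2"
      then have "M1 * 1 = M1 * P" using gM by simp
      then have "P = 1" using M0 by simp
      then show False using P(1) unfolding irreducible_def by simp
    qed
    have "\<forall>a b. coprime a (g ^ 2) \<longrightarrow> coprime b (g ^ 2) \<longrightarrow> a mod M1 = b mod M1 \<longrightarrow> \<chi> a = \<chi> b"
    proof (intro allI impI)
      fix a b :: "'a poly"
      assume ca: "coprime a (g ^ 2)" and cb: "coprime b (g ^ 2)" and ab: "a mod M1 = b mod M1"
      have ca': "coprime a g" and cb': "coprime b g" using ca cb by (simp_all add: coprime_g2)
      have "M1 dvd a - b" using ab by (simp add: mod_eq_dvd_iff)
      then have "M1 dvd b - a" by (rule dvd_diff_swap)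
      then have "T h a = T h b" using T_cong_M1[OF g1 h1 _ ca'] by (simp add: M1_def)
      then have "E h a = E h b" using ca' cb' by (simp add: E_def)
      then show "\<chi> a = \<chi> b" using Eh by simp
    qed
    then have "\<exists>M1. lead_coeff M1 = 1 \<and> M1 dvd g ^ 2 \<and> M1 \<noteq> g ^ 2 \<and>
          (\<forall>a b. coprime a (g ^ 2) \<longrightarrow> coprime b (g ^ 2) \<longrightarrow> a mod M1 = b mod M1 \<longrightarrow> \<chi> a = \<chi> b)"
      using lM Md Mne by (intro exI[of _ M1]) blast
    then show False using noM by (rule notE[rotated])
  qed
  show ?thesis using hcop dh Eh by blast
qed

end




theorem mainTheorem7:
  fixes g :: "'a::{field,finite} poly" and \<psi> :: "'a \<Rightarrow> complex" and p :: nat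
  assumes "prime p" and "p > 2" and "CHAR('a) = p"
    and "nontrivial_additive_char \<psi>"
    and "lead_coeff g = 1" and "squarefree g" and "degree g \<ge> 1"
  shows "bij_betw (\<lambda>h. chi_f \<psi> h g)
           {h. coprime h g \<and> degree h < degree g}
           {\<chi>. primitive_dirichlet_char (g ^ 2) \<chi> \<and>
                (\<forall>a. coprime a (g ^ 2) \<longrightarrow> \<chi> a ^ p = 1)}
         \<and> (\<forall>h. coprime h g \<and> degree h < degree g \<longrightarrow> even_char (chi_f \<psi> h g))"
proof -
  interpret gpsi g \<psi>
    by unfold_locales (use assms in auto)
  have CH: "CHAR('a) = p" by (rule assms(3))
  have chiE: "chi_f \<psi> h g = E h" if "degree h < degree g" for h
    using chi_E[OF that] .
  have inj: "inj_on (\<lambda>h. chi_f \<psi> h g) {h. coprime h g \<and> degree h < degree g}"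
  proof (rule inj_onI)
    fix h1 h2 assume h1: "h1 \<in> {h. coprime h g \<and> degree h < degree g}"
      and h2: "h2 \<in> {h. coprime h g \<and> degree h < degree g}"
      and eq: "chi_f \<psi> h1 g = chi_f \<psi> h2 g"
    have "E h1 = E h2" using eq chiE h1 h2 by simp
    then show "h1 = h2" using E_inj h1 h2 by blast
  qed
  have img: "(\<lambda>h. chi_f \<psi> h g) ` {h. coprime h g \<and> degree h < degree g} =
      {\<chi>. primitive_dirichlet_char (g ^ 2) \<chi> \<and> (\<forall>a. coprime a (g ^ 2) \<longrightarrow> \<chi> a ^ p = 1)}"
  proof (intro equalityI subsetI)
    fix \<chi> assume "\<chi> \<in> (\<lambda>h. chi_f \<psi> h g) ` {h. coprime h g \<and> degree h < degree g}"
    then obtain h where h: "coprime h g" "degree h < degree g" "\<chi> = chi_f \<psi> h g" by blast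
    have "\<chi> = E h" using h chiE by simp
    moreover have "primitive_dirichlet_char (g ^ 2) (E h)" by (rule E_primitive[OF h(1)])
    moreover have "\<forall>a. coprime a (g ^ 2) \<longrightarrow> E h a ^ p = 1"
      using E_pow_p CH by (simp add: coprime_g2)
    ultimately show "\<chi> \<in> {\<chi>. primitive_dirichlet_char (g ^ 2) \<chi> \<and> (\<forall>a. coprime a (g ^ 2) \<longrightarrow> \<chi> a ^ p = 1)}"
      by simp
  next
    fix \<chi> assume "\<chi> \<in> {\<chi>. primitive_dirichlet_char (g ^ 2) \<chi> \<and> (\<forall>a. coprime a (g ^ 2) \<longrightarrow> \<chi> a ^ p = 1)}"
    then have pr: "primitive_dirichlet_char (g ^ 2) \<chi>" and pw: "\<forall>a. coprime a (g ^ 2) \<longrightarrow> \<chi> a ^ CHAR('a) = 1"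
      using CH by auto
    obtain h where h: "coprime h g" "degree h < degree g" "E h = \<chi>" using E_surj[OF pr pw] by blast
    then have "\<chi> = chi_f \<psi> h g" using chiE by simp
    then show "\<chi> \<in> (\<lambda>h. chi_f \<psi> h g) ` {h. coprime h g \<and> degree h < degree g}" using h by blast
  qed
  have even: "\<forall>h. coprime h g \<and> degree h < degree g \<longrightarrow> even_char (chi_f \<psi> h g)"
    using chiE E_const by (auto simp: even_char_def)
  show ?thesis using inj img even by (simp add: bij_betw_def)
qed


end
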